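(* Let $K$ be a field of characteristic $\neq2$ with involution $a\mapsto\bar a$, let $\varepsilon\in\{1,-1\}$ with $\varepsilon=1$ if the involution is nonidentity, and let $\Phi$ be an $n\times n$ Frobenius block with characteristic polynomial $\chi(x)=p(x)^s=x^n+\alpha_1x^{n-1}+\dots+\alpha_n$, $p$ monic irreducible. A nonsingular matrix $X$ with $X=\varepsilon X^*=\Phi^*X\Phi$ exists if and only if (C1) $\chi(x)=\chi^\vee(x)$, and (C2) if the involution is the identity and $\varepsilon=(-1)^n$, then $\deg p(x)>1$. When these hold, one can take $X=[a_{j-i}]_{i,j=1}^n$, where $a_{1-n},\dots,a_{n-1}$ are terms of the $\chi$-recurrent sequence determined by the fragment $v=(a_{-m},\dots,a_m)$ (of length $n$ or $n+1$) equal to: (a) $(\varepsilon\bar\alpha_n-1,0,\dots,0,\alpha_n-\varepsilon)$ if $n=2m$ and $\alpha_n\neq\varepsilon$; (b) $(\alpha_1,-1,0,\dots,0,-1,\alpha_1)$ (and $v=(\alpha_1,-2,\alpha_1)$ for $n=2$) if $n=2m$, $\varepsilon=1$, and the involution is the identity; (c) $(-k,0,\dots,0,k)$ if $n=2m$, $\alpha_n=1$ and the involution is nonidentity, and also if $n=2m+1$, $p(x)=x+\alpha$, $\alpha^{n-1}=-1$; (d) $(\varepsilon,0,\dots,0,1)$ if $n=2m+1$, in every case other than $p(x)=x+\alpha$ with $\alpha^{n-1}=-1$.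
   Context: $M^*=[\bar m_{ji}]$ for $M=[m_{ij}]$. For $f=a_0x^n+\dots+a_n$ with $a_n\ne0$, $f^\vee(x)=\bar a_n^{-1}(\bar a_nx^n+\dots+\bar a_1x+\bar a_0)$. A Frobenius block is an $n\times n$ matrix with ones on the subdiagonal, last column $(-c_n,\dots,-c_1)^T$, zeros elsewhere, and characteristic polynomial $x^n+c_1x^{n-1}+\dots+c_n$ a power of an irreducible polynomial. For $f(x)=\gamma_0x^m+\dots+\gamma_m$, a sequence $(a_q,\dots,a_r)$ is $f$-recurrent if $\gamma_0a_{l+m}+\dots+\gamma_ma_l=0$ for $q\le l\le r-m$. For a nonidentity involution, $k$ is a fixed element with $k=-\bar k\ne0$. *)

theory Defs
  imports "Jordan_Normal_Form.Determinant" "HOL-Computational_Algebra.Polynomial"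
    "HOL-Computational_Algebra.Polynomial_Factorial"
begin

definition is_involution :: "('a::field \<Rightarrow> 'a) \<Rightarrow> bool" where
  "is_involution inv_f \<longleftrightarrow>
     (\<forall>a b. inv_f (a + b) = inv_f a + inv_f b) \<and>
     (\<forall>a b. inv_f (a * b) = inv_f a * inv_f b) \<and>
     (\<forall>a. inv_f (inv_f a) = a)"

definition star_mat :: "('a \<Rightarrow> 'a) \<Rightarrow> 'a mat \<Rightarrow> 'a mat" where
  "star_mat inv_f M = transpose_mat (map_mat inv_f M)"

text \<open>For f = a_0 x^n + ... + a_n (a_n = constant term),
  f^vee(x) = inv_f(a_n)^{-1} (inv_f(a_n) x^n + ... + inv_f(a_1) x + inv_f(a_0)).\<close>
definition dual_poly :: "('a::field \<Rightarrow> 'a) \<Rightarrow> 'a poly \<Rightarrow> 'a poly" where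
  "dual_poly inv_f f = smult (inverse (inv_f (coeff f 0))) (map_poly inv_f (reflect_poly f))"

text \<open>Frobenius block of a monic polynomial chi = x^n + c_1 x^(n-1) + ... + c_n:
  ones on the subdiagonal, last column (-c_n,...,-c_1)^T, zeros elsewhere (0-indexed).\<close>
definition frobenius_block :: "'a::field poly \<Rightarrow> 'a mat" where
  "frobenius_block chi = mat (degree chi) (degree chi)
     (\<lambda>(i, j). if j = degree chi - 1 then - coeff chi i
               else if i = j + 1 then 1 else 0)"

definition recurrent :: "'a::field poly \<Rightarrow> (int \<Rightarrow> 'a) \<Rightarrow> int \<Rightarrow> int \<Rightarrow> bool" where
  "recurrent f a q r \<longleftrightarrow>
     (\<forall>l. q \<le> l \<and> l \<le> r - int (degree f) \<longrightarrow>
        (\<Sum>i\<le>degree f. coeff f i * a (l + int i)) = 0)"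

definition herm_solution :: "('a::field \<Rightarrow> 'a) \<Rightarrow> 'a \<Rightarrow> nat \<Rightarrow> 'a mat \<Rightarrow> 'a mat \<Rightarrow> bool" where
  "herm_solution inv_f eps n Phi X \<longleftrightarrow>
     X \<in> carrier_mat n n \<and> det X \<noteq> 0 \<and>
     X = eps \<cdot>\<^sub>m star_mat inv_f X \<and> X = star_mat inv_f Phi * X * Phi"

definition toeplitz_mat :: "nat \<Rightarrow> (int \<Rightarrow> 'a) \<Rightarrow> 'a mat" where
  "toeplitz_mat n a = mat n n (\<lambda>(i, j). a (int j - int i))"

definition fragment_works ::
  "('a::field \<Rightarrow> 'a) \<Rightarrow> 'a \<Rightarrow> 'a poly \<Rightarrow> 'a mat \<Rightarrow> nat \<Rightarrow> (int \<Rightarrow> 'a) \<Rightarrow> bool" where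
  "fragment_works inv_f eps chi Phi m v \<longleftrightarrow>
     (let n = degree chi in
       (\<exists>a. recurrent chi a (1 - int n) (int n - 1) \<and> (\<forall>i. - int m \<le> i \<and> i \<le> int m \<longrightarrow> a i = v i)) \<and>
       (\<forall>a. recurrent chi a (1 - int n) (int n - 1) \<and> (\<forall>i. - int m \<le> i \<and> i \<le> int m \<longrightarrow> a i = v i)
          \<longrightarrow> herm_solution inv_f eps n Phi (toeplitz_mat n a)))"

end

theory Submission
  imports Defs
begin


lemma inv_basic:
  assumes "is_involution f"
  shows "f 0 = 0" "f 1 = 1" "f (-x) = - f x" "f (x - y) = f x - f y" "f (x + y) = f x + f y"
    "f (x * y) = f x * f y" "f (f x) = x"
proof -
  have add: "\<And>a b. f (a + b) = f a + f b" and mul: "\<And>a b. f (a * b) = f a * f b"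
    and ii: "\<And>a. f (f a) = a" using assms unfolding is_involution_def by auto
  have "f 0 = f 0 + f 0" using add[of 0 0] by simp
  hence z: "f 0 = 0" by (metis add_cancel_right_right)
  thus "f 0 = 0" .
  have "f 1 = f 1 * f 1" using mul[of 1 1] by simp
  hence "f 1 = 0 \<or> f 1 = 1" by (metis mult_cancel_right1 mult_zero_left)
  moreover have "f 1 \<noteq> 0" using ii[of 1] z by auto
  ultimately show "f 1 = 1" by auto
  have n: "f (-u) = - f u" for u
  proof -
    have "f (-u) + f u = 0" using add[of "-u" u] z by simp
    thus ?thesis by (simp add: eq_neg_iff_add_eq_0)
  qed
  thus "f (-x) = - f x" .
  show "f (x - y) = f x - f y" using add[of x "-y"] n[of y] by simp
  show "f (x + y) = f x + f y" "f (x * y) = f x * f y" "f (f x) = x" using add mul ii by auto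
qed

lemma Phi_carrier: "frobenius_block chi \<in> carrier_mat (degree chi) (degree chi)"
  unfolding frobenius_block_def by simp

lemma Phi_idx: "i < degree chi \<Longrightarrow> j < degree chi \<Longrightarrow> frobenius_block chi $$ (i,j) =
   (if j = degree chi - 1 then - coeff chi i else if i = j + 1 then 1 else 0)"
  unfolding frobenius_block_def by simp

lemma XPhi:
  assumes X: "X \<in> carrier_mat (degree chi) (degree chi)" and i: "i < degree chi" and j: "j < degree chi"
  shows "(X * frobenius_block chi) $$ (i,j) = (if j = degree chi - 1 then
      - (\<Sum>l<degree chi. X $$ (i,l) * coeff chi l) else X $$ (i, j+1))"
proof -
  let ?n = "degree chi"
  have "(X * frobenius_block chi) $$ (i,j) = (\<Sum>l\<in>{0..<?n}. X $$ (i,l) * frobenius_block chi $$ (l,j))"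
    using X i j Phi_carrier[of chi] by (simp add: scalar_prod_def)
  also have "\<dots> = (\<Sum>l<?n. X $$ (i,l) * (if j = ?n - 1 then - coeff chi l else if l = j + 1 then 1 else 0))"
    using j by (intro sum.cong) (auto simp: Phi_idx)
  also have "\<dots> = (if j = ?n - 1 then
      - (\<Sum>l<?n. X $$ (i,l) * coeff chi l) else X $$ (i, j+1))"
  proof (cases "j = ?n - 1")
    case True thus ?thesis by (simp add: sum_negf)
  next
    case False
    hence "j + 1 < ?n" using j by auto
    thus ?thesis using False by (simp add: if_distrib[where f="\<lambda>x. _ * x"] cong: if_cong)
  qed
  finally show ?thesis .
qed

lemma star_idx: "A \<in> carrier_mat n n \<Longrightarrow> i < n \<Longrightarrow> j < n \<Longrightarrow> star_mat f A $$ (i,j) = f (A $$ (j,i))"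
  unfolding star_mat_def by simp

lemma star_carrier: "A \<in> carrier_mat n n \<Longrightarrow> star_mat f A \<in> carrier_mat n n"
  unfolding star_mat_def by simp

lemma StarPhiY:
  assumes inv: "is_involution f" and Y: "Y \<in> carrier_mat (degree chi) (degree chi)"
    and i: "i < degree chi" and j: "j < degree chi"
  shows "(star_mat f (frobenius_block chi) * Y) $$ (i,j) = (if i = degree chi - 1 then
      - (\<Sum>k<degree chi. f (coeff chi k) * Y $$ (k,j)) else Y $$ (i+1, j))"
proof -
  let ?n = "degree chi"
  have "(star_mat f (frobenius_block chi) * Y) $$ (i,j) = (\<Sum>k\<in>{0..<?n}. f (frobenius_block chi $$ (k,i)) * Y $$ (k,j))"
    using Y i j Phi_carrier[of chi] unfolding star_mat_def
    by (simp add: scalar_prod_def)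
  also have "\<dots> = (\<Sum>k<?n. (if i = ?n - 1 then - f (coeff chi k) else if k = i + 1 then 1 else 0) * Y $$ (k,j))"
    using i by (intro sum.cong) (auto simp: Phi_idx inv_basic[OF inv])
  also have "\<dots> = (if i = ?n - 1 then
      - (\<Sum>k<?n. f (coeff chi k) * Y $$ (k,j)) else Y $$ (i+1, j))"
  proof (cases "i = ?n - 1")
    case True thus ?thesis by (simp add: sum_negf)
  next
    case False
    hence "i + 1 < ?n" using i by auto
    thus ?thesis using False by (simp add: if_distrib[where f="\<lambda>x. x * _"] cong: if_cong)
  qed
  finally show ?thesis .
qed



lemma toep_idx: "i < n \<Longrightarrow> j < n \<Longrightarrow> toeplitz_mat n a $$ (i,j) = a (int j - int i)"
  unfolding toeplitz_mat_def by simp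

lemma toep_carrier: "toeplitz_mat n a \<in> carrier_mat n n"
  unfolding toeplitz_mat_def by simp

lemma sum_atMost_last: fixes n :: nat shows "(\<Sum>i\<le>n. g i) = (\<Sum>i<n. g i) + (g n :: 'b::comm_monoid_add)"
  using sum.lessThan_Suc[of g n] by (simp add: lessThan_Suc_atMost)

lemma rec_L1:
  assumes rec: "recurrent chi a (1 - int n) (int n - 1)" and dn: "degree chi = n"
    and mon: "lead_coeff chi = 1" and l: "1 - int n \<le> l0" "l0 \<le> -1"
  shows "(\<Sum>i<n. coeff chi i * a (l0 + int i)) = - a (l0 + int n)"
proof -
  have "(\<Sum>i\<le>n. coeff chi i * a (l0 + int i)) = 0" using rec l dn unfolding recurrent_def by auto
  thus ?thesis using mon dn by (simp add: sum_atMost_last eq_neg_iff_add_eq_0)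
qed

lemma rec_L2:
  assumes rec: "recurrent chi a (1 - int n) (int n - 1)" and dn: "degree chi = n"
    and l: "1 - int n \<le> l0" "l0 \<le> -1"
  shows "(\<Sum>i<n. coeff chi (Suc i) * a (l0 + int (Suc i))) = - coeff chi 0 * a l0"
proof -
  have "(\<Sum>i\<le>n. coeff chi i * a (l0 + int i)) = 0" using rec l dn unfolding recurrent_def by auto
  thus ?thesis by (simp add: sum.atMost_shift eq_neg_iff_add_eq_0 add.commute)
qed

lemma suff_Phi:
  assumes inv: "is_involution f" and mon: "lead_coeff chi = 1" and dn: "degree chi = n" and n1: "n \<ge> 1"
    and rec: "recurrent chi a (1 - int n) (int n - 1)"
    and R: "\<And>k. k \<le> n \<Longrightarrow> f (coeff chi (n - k)) = f (coeff chi 0) * coeff chi k"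
  shows "toeplitz_mat n a = star_mat f (frobenius_block chi) * toeplitz_mat n a * frobenius_block chi"
proof -
  let ?X = "toeplitz_mat n a" and ?P = "frobenius_block chi" and ?c = "coeff chi"
  have X: "?X \<in> carrier_mat n n" by (rule toep_carrier)
  have P: "?P \<in> carrier_mat n n" using Phi_carrier[of chi] dn by simp
  have SP: "star_mat f ?P \<in> carrier_mat n n" using star_carrier[OF P] .
  have XP: "?X * ?P \<in> carrier_mat n n" using X P by simp
  have R': "\<And>k. k \<le> n \<Longrightarrow> f (?c k) = f (?c 0) * ?c (n - k)"
  proof -
    fix k assume k: "k \<le> n"
    have "f (?c (n - (n - k))) = f (?c 0) * ?c (n - k)" using R[of "n - k"] by simp
    thus "f (?c k) = f (?c 0) * ?c (n - k)" using k by simp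
  qed
  have f0c0: "f (?c 0) * ?c 0 = 1" using R[of 0] mon dn inv_basic[OF inv] by simp
  have assoc: "star_mat f ?P * ?X * ?P = star_mat f ?P * (?X * ?P)"
    using assoc_mult_mat[OF SP X P] .
  show ?thesis
  proof (rule eq_matI)
    show "dim_row ?X = dim_row (star_mat f ?P * ?X * ?P)" "dim_col ?X = dim_col (star_mat f ?P * ?X * ?P)"
      using X P SP by auto
    fix i j assume "i < dim_row (star_mat f ?P * ?X * ?P)" "j < dim_col (star_mat f ?P * ?X * ?P)"
    hence i: "i < n" and j: "j < n" using SP X P by auto
    have XPidx: "\<And>k. k < n \<Longrightarrow> (?X * ?P) $$ (k, j) = (if j = n - 1 then
      - (\<Sum>l<n. a (int l - int k) * ?c l) else a (int (j+1) - int k))"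
      using XPhi[of ?X chi _ j] X j dn by (simp add: toep_idx)
    have e: "(star_mat f ?P * ?X * ?P) $$ (i,j) = (if i = n - 1 then
      - (\<Sum>k<n. f (?c k) * (?X * ?P) $$ (k,j)) else (?X * ?P) $$ (i+1, j))"
      unfolding assoc using StarPhiY[OF inv, of "?X * ?P" chi i j] XP i j dn by simp
    show "?X $$ (i,j) = (star_mat f ?P * ?X * ?P) $$ (i,j)"
    proof (cases "i = n - 1")
      case False
      hence i1: "i + 1 < n" using i by auto
      show ?thesis
      proof (cases "j = n - 1")
        case True
        have "(\<Sum>l<n. a (int l - int (i+1)) * ?c l) = (\<Sum>l<n. ?c l * a (- int (i+1) + int l))"
          by (intro sum.cong refl) (simp add: algebra_simps)
        also have "\<dots> = - a (- int (i+1) + int n)"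
          by (rule rec_L1[OF rec dn mon]) (use i1 in auto)
        finally show ?thesis using e False True XPidx[OF i1] i j by (simp add: toep_idx algebra_simps)
      next
        case False
        thus ?thesis using e \<open>i \<noteq> n - 1\<close> XPidx[OF i1] i j by (simp add: toep_idx)
      qed
    next
      case True
      note iT = True
      show ?thesis
      proof (cases "j = n - 1")
        case False
        have "(\<Sum>k<n. f (?c k) * (?X * ?P) $$ (k,j)) = (\<Sum>k<n. f (?c 0) * (?c (n - k) * a (int (j+1) - int k)))"
        proof (intro sum.cong refl)
          fix k assume k: "k \<in> {..<n}"
          have "f (?c k) = f (?c 0) * ?c (n - k)" using R'[of k] k by simp
          thus "f (?c k) * (?X * ?P) $$ (k,j) = f (?c 0) * (?c (n - k) * a (int (j+1) - int k))"
            using XPidx[of k] k False by simp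
        qed
        also have "\<dots> = f (?c 0) * (\<Sum>k<n. ?c (n - k) * a (int (j+1) - int k))"
          by (simp add: sum_distrib_left)
        also have "(\<Sum>k<n. ?c (n - k) * a (int (j+1) - int k)) =
             (\<Sum>k<n. ?c (Suc k) * a ((int (j+1) - int n) + int (Suc k)))"
          by (subst sum.nat_diff_reindex[symmetric]) (intro sum.cong refl, auto simp: of_nat_diff Suc_diff_Suc)
        also have "\<dots> = - ?c 0 * a (int (j+1) - int n)"
          by (rule rec_L2[OF rec dn]) (use j False in auto)
        finally have "(\<Sum>k<n. f (?c k) * (?X * ?P) $$ (k,j)) = - (f (?c 0) * ?c 0) * a (int (j+1) - int n)"
          by (simp add: algebra_simps)
        thus ?thesis using e iT f0c0 i j by (simp add: toep_idx algebra_simps)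
      next
        case True
        note jT = True
        obtain N where N: "n = Suc N" using n1 by (cases n) auto
        have T: "\<And>k. k < N \<Longrightarrow> (\<Sum>l<n. a (int l - int (Suc k)) * ?c l) = - a (int n - int (Suc k))"
        proof -
          fix k assume k: "k < N"
          have "(\<Sum>l<n. a (int l - int (Suc k)) * ?c l) = (\<Sum>l<n. ?c l * a (- int (Suc k) + int l))"
            by (intro sum.cong refl) (simp add: algebra_simps)
          also have "\<dots> = - a (- int (Suc k) + int n)"
            by (rule rec_L1[OF rec dn mon]) (use k N in auto)
          finally show "(\<Sum>l<n. a (int l - int (Suc k)) * ?c l) = - a (int n - int (Suc k))" by (simp add: algebra_simps)
        qed
        have "(\<Sum>k<n. f (?c k) * (?X * ?P) $$ (k,j)) =
            (\<Sum>k<n. - (f (?c k) * (\<Sum>l<n. a (int l - int k) * ?c l)))"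
          by (intro sum.cong) (use XPidx jT in auto)
        also have "\<dots> = - (f (?c 0) * (\<Sum>l<n. a (int l) * ?c l)) +
            (\<Sum>k<N. - (f (?c (Suc k)) * (\<Sum>l<n. a (int l - int (Suc k)) * ?c l)))"
          unfolding N by (subst sum.lessThan_Suc_shift) simp
        also have "(\<Sum>k<N. - (f (?c (Suc k)) * (\<Sum>l<n. a (int l - int (Suc k)) * ?c l))) =
            (\<Sum>k<N. f (?c 0) * (?c (N - k) * a (int (N - k))))"
        proof (intro sum.cong refl)
          fix k assume k: "k \<in> {..<N}"
          have "f (?c (Suc k)) = f (?c 0) * ?c (N - k)" using R'[of "Suc k"] k N by simp
          moreover have "int n - int (Suc k) = int (N - k)" using k N by auto
          ultimately show "- (f (?c (Suc k)) * (\<Sum>l<n. a (int l - int (Suc k)) * ?c l)) = f (?c 0) * (?c (N - k) * a (int (N - k)))"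
            using T[of k] k by simp
        qed
        also have "\<dots> = f (?c 0) * (\<Sum>k<N. ?c (Suc (N - Suc k)) * a (int (Suc (N - Suc k))))"
          unfolding sum_distrib_left by (intro sum.cong refl) (auto simp: Suc_diff_Suc)
        also have "(\<Sum>k<N. ?c (Suc (N - Suc k)) * a (int (Suc (N - Suc k)))) = (\<Sum>k<N. ?c (Suc k) * a (int (Suc k)))"
          by (rule sum.nat_diff_reindex)
        also have "(\<Sum>l<n. a (int l) * ?c l) = ?c 0 * a 0 + (\<Sum>k<N. ?c (Suc k) * a (int (Suc k)))"
          unfolding N by (subst sum.lessThan_Suc_shift) (simp add: mult.commute)
        finally have "(\<Sum>k<n. f (?c k) * (?X * ?P) $$ (k,j)) = - (f (?c 0) * ?c 0) * a 0"
          by (simp add: algebra_simps)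
        thus ?thesis using e iT jT f0c0 i j by (simp add: toep_idx)
      qed
    qed
  qed
qed

lemma suff_sym:
  assumes sym: "\<And>t. \<bar>t\<bar> \<le> int n - 1 \<Longrightarrow> a (- t) = eps * f (a t)"
  shows "toeplitz_mat n a = eps \<cdot>\<^sub>m star_mat f (toeplitz_mat n a)"
proof (rule eq_matI)
  fix i j assume "i < dim_row (eps \<cdot>\<^sub>m star_mat f (toeplitz_mat n a))" "j < dim_col (eps \<cdot>\<^sub>m star_mat f (toeplitz_mat n a))"
  hence i: "i < n" and j: "j < n" unfolding star_mat_def toeplitz_mat_def by auto
  have "a (int j - int i) = a (- (int i - int j))" by simp
  also have "\<dots> = eps * f (a (int i - int j))" using sym[of "int i - int j"] i j by auto
  finally show "toeplitz_mat n a $$ (i,j) = (eps \<cdot>\<^sub>m star_mat f (toeplitz_mat n a)) $$ (i,j)"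
    using i j unfolding star_mat_def toeplitz_mat_def by simp
qed (auto simp: star_mat_def toeplitz_mat_def)



lemma inv_sum: assumes "is_involution f" shows "f (sum g A) = (\<Sum>x\<in>A. f (g x))"
proof (induction A rule: infinite_finite_induct)
  case (infinite A) thus ?case using inv_basic[OF assms] by simp
next
  case empty thus ?case using inv_basic[OF assms] by simp
next
  case (insert x F) thus ?case using inv_basic[OF assms] by simp
qed

lemma nec_toep:
  assumes inv: "is_involution f" and mon: "lead_coeff chi = 1" and dn: "degree chi = n" and n1: "n \<ge> 1"
    and X: "X \<in> carrier_mat n n"
    and eq: "X = star_mat f (frobenius_block chi) * X * frobenius_block chi"
  shows "\<exists>a. X = toeplitz_mat n a \<and> recurrent chi a (1 - int n) (int n - 1) \<and>
      a 0 = (\<Sum>k<n. f (coeff chi k) * (\<Sum>l<n. a (int l - int k) * coeff chi l))"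
proof -
  let ?P = "frobenius_block chi" and ?c = "coeff chi"
  have P: "?P \<in> carrier_mat n n" using Phi_carrier[of chi] dn by simp
  have SP: "star_mat f ?P \<in> carrier_mat n n" using star_carrier[OF P] .
  have XP: "X * ?P \<in> carrier_mat n n" using X P by simp
  have assoc: "star_mat f ?P * X * ?P = star_mat f ?P * (X * ?P)"
    using assoc_mult_mat[OF SP X P] .
  have E: "X $$ (i,j) = (if i = n - 1 then - (\<Sum>k<n. f (?c k) * (X * ?P) $$ (k,j)) else (X * ?P) $$ (i+1, j))"
    if "i < n" "j < n" for i j
    using StarPhiY[OF inv, of "X * ?P" chi i j] XP that dn eq assoc by simp
  have XPi: "(X * ?P) $$ (i,j) = (if j = n - 1 then - (\<Sum>l<n. X $$ (i,l) * ?c l) else X $$ (i, j+1))"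
    if "i < n" "j < n" for i j
    using XPhi[of X chi i j] X that dn by simp
  have shift: "X $$ (i,j) = X $$ (i+1, j+1)" if "i < n - 1" "j < n - 1" for i j
    using E[of i j] XPi[of "i+1" j] that by auto
  define a where "a t = (if t \<ge> 0 then X $$ (0, nat t) else X $$ (nat (-t), 0))" for t :: int
  have Xa: "X $$ (i,j) = a (int j - int i)" if "i < n" "j < n" for i j
    using that
  proof (induction i arbitrary: j)
    case 0 thus ?case by (simp add: a_def)
  next
    case (Suc i)
    show ?case
    proof (cases j)
      case 0 thus ?thesis by (simp add: a_def flip: of_nat_Suc)
    next
      case (Suc j')
      have "X $$ (i, j') = X $$ (Suc i, j)" using shift[of i j'] Suc \<open>Suc i < n\<close> \<open>j < n\<close> by auto
      moreover have "X $$ (i, j') = a (int j' - int i)" using Suc.IH[of j'] Suc.prems Suc by auto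
      ultimately show ?thesis using Suc by simp
    qed
  qed
  have XT: "X = toeplitz_mat n a"
    by (rule eq_matI) (use X Xa in \<open>auto simp: toeplitz_mat_def\<close>)
  have rec: "recurrent chi a (1 - int n) (int n - 1)"
    unfolding recurrent_def
  proof (intro allI impI)
    fix l assume l: "1 - int n \<le> l \<and> l \<le> int n - 1 - int (degree chi)"
    define i where "i = nat (- l) - 1"
    have i: "i < n - 1" "l = - int i - 1" using l dn unfolding i_def by auto
    have "X $$ (i, n-1) = - (\<Sum>l<n. X $$ (i+1,l) * ?c l)"
      using E[of i "n-1"] XPi[of "i+1" "n-1"] i n1 by auto
    moreover have "(\<Sum>l<n. X $$ (i+1,l) * ?c l) = (\<Sum>k<n. a (int k - int (i+1)) * ?c k)"
      by (intro sum.cong refl) (use Xa i in auto)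
    ultimately have "a (int (n-1) - int i) = - (\<Sum>k<n. a (int k - int (i+1)) * ?c k)"
      using Xa i n1 by simp
    moreover have "(\<Sum>k<n. a (int k - int (i+1)) * ?c k) = (\<Sum>k<n. ?c k * a (l + int k))"
      unfolding i(2) by (intro sum.cong refl) (simp add: algebra_simps)
    ultimately have A: "a (int (n-1) - int i) = - (\<Sum>k<n. ?c k * a (l + int k))" by simp
    have "l + int n = int (n-1) - int i" using i n1 by simp
    hence "(\<Sum>k<n. ?c k * a (l + int k)) + ?c n * a (l + int n) = 0"
      using A mon dn by simp
    thus "(\<Sum>k\<le>degree chi. ?c k * a (l + int k)) = 0" using dn by (simp add: sum_atMost_last)
  qed
  have "a 0 = X $$ (n-1, n-1)" using Xa n1 by simp
  also have "\<dots> = - (\<Sum>k<n. f (?c k) * (X * ?P) $$ (k,n-1))"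
    using E[of "n-1" "n-1"] n1 by simp
  also have "\<dots> = (\<Sum>k<n. f (?c k) * (\<Sum>l<n. a (int l - int k) * ?c l))"
    unfolding sum_negf[symmetric]
  proof (intro sum.cong refl)
    fix k assume k: "k \<in> {..<n}"
    have "(\<Sum>l<n. X $$ (k,l) * ?c l) = (\<Sum>l<n. a (int l - int k) * ?c l)"
      by (intro sum.cong refl) (use Xa k in auto)
    thus "- (f (?c k) * (X * ?P) $$ (k,n-1)) = f (?c k) * (\<Sum>l<n. a (int l - int k) * ?c l)"
      using XPi[of k "n-1"] k n1 by simp
  qed
  finally show ?thesis using XT rec by blast
qed



lemma nec_R:
  assumes inv: "is_involution f" and mon: "lead_coeff chi = 1" and dn: "degree chi = n" and n1: "n \<ge> 1"
    and rec: "recurrent chi a (1 - int n) (int n - 1)"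
    and sym: "\<And>t. \<bar>t\<bar> \<le> int n - 1 \<Longrightarrow> a (- t) = eps * f (a t)"
    and corner: "a 0 = (\<Sum>k<n. f (coeff chi k) * (\<Sum>l<n. a (int l - int k) * coeff chi l))"
    and dt: "det (toeplitz_mat n a) \<noteq> 0"
    and k: "k \<le> n"
  shows "f (coeff chi (n - k)) = f (coeff chi 0) * coeff chi k"
proof -
  let ?c = "coeff chi" and ?X = "toeplitz_mat n a"
  define Y where "Y k = f (?c (n - k)) - f (?c 0) * ?c k" for k
  obtain N where N: "n = Suc N" using n1 by (cases n) auto
  have recl: "(\<Sum>j\<le>n. ?c j * a (l + int j)) = 0" if "1 - int n \<le> l" "l \<le> -1" for l
    using rec that dn unfolding recurrent_def by auto
  have entry: "(\<Sum>j<n. a (int j - int i) * Y j) = 0" if i: "i < n" for i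
  proof (cases "i = 0")
    case False
    define l0 where "l0 = - int i"
    have l0: "1 - int n \<le> l0" "l0 \<le> -1" using i False unfolding l0_def by auto
    have "(\<Sum>j\<le>n. f (?c (n - j)) * a (l0 + int j)) = (\<Sum>j<Suc n. f (?c (n - j)) * a (l0 + int j))"
      by (simp add: lessThan_Suc_atMost)
    also have "\<dots> = (\<Sum>j<Suc n. f (?c (n - (n - j))) * a (l0 + int (n - j)))"
      by (subst sum.nat_diff_reindex[symmetric]) simp
    also have "\<dots> = (\<Sum>j\<le>n. f (?c j) * (eps * f (a ((- int n - l0) + int j))))"
      unfolding lessThan_Suc_atMost
    proof (intro sum.cong refl)
      fix j assume j: "j \<in> {..n}"
      have "a (l0 + int (n - j)) = a (- ((- int n - l0) + int j))" using j by (simp add: of_nat_diff algebra_simps)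
      also have "\<dots> = eps * f (a ((- int n - l0) + int j))" by (rule sym) (use j l0 in auto)
      finally show "f (?c (n - (n - j))) * a (l0 + int (n - j)) = f (?c j) * (eps * f (a ((- int n - l0) + int j)))"
        using j by simp
    qed
    also have "\<dots> = eps * f (\<Sum>j\<le>n. ?c j * a ((- int n - l0) + int j))"
      by (simp add: inv_sum[OF inv] inv_basic[OF inv] sum_distrib_left algebra_simps)
    also have "\<dots> = 0" using recl[of "- int n - l0"] l0 inv_basic[OF inv] by simp
    finally have T1: "(\<Sum>j<n. f (?c (n - j)) * a (l0 + int j)) = - f (?c 0) * a (l0 + int n)"
      by (simp add: sum_atMost_last eq_neg_iff_add_eq_0)
    have T2: "(\<Sum>j<n. ?c j * a (l0 + int j)) = - a (l0 + int n)"
      by (rule rec_L1[OF rec dn mon l0])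
    have "(\<Sum>j<n. a (int j - int i) * Y j) = (\<Sum>j<n. f (?c (n - j)) * a (l0 + int j)) - f (?c 0) * (\<Sum>j<n. ?c j * a (l0 + int j))"
      unfolding Y_def l0_def by (simp add: algebra_simps sum_subtractf sum_distrib_left)
    thus ?thesis using T1 T2 by simp
  next
    case True
    have T: "(\<Sum>l<n. a (int l - int (Suc k)) * ?c l) = - a (int n - int (Suc k))" if k: "k < N" for k
    proof -
      have "(\<Sum>l<n. a (int l - int (Suc k)) * ?c l) = (\<Sum>l<n. ?c l * a (- int (Suc k) + int l))"
        by (intro sum.cong refl) (simp add: algebra_simps)
      also have "\<dots> = - a (- int (Suc k) + int n)"
        by (rule rec_L1[OF rec dn mon]) (use k N in auto)
      finally show ?thesis by (simp add: algebra_simps)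
    qed
    have "a 0 = f (?c 0) * (\<Sum>l<n. a (int l) * ?c l) + (\<Sum>k<N. f (?c (Suc k)) * (\<Sum>l<n. a (int l - int (Suc k)) * ?c l))"
      using corner unfolding N by (subst (asm) sum.lessThan_Suc_shift) simp
    also have "(\<Sum>k<N. f (?c (Suc k)) * (\<Sum>l<n. a (int l - int (Suc k)) * ?c l)) = - (\<Sum>k<N. f (?c (Suc k)) * a (int n - int (Suc k)))"
      unfolding sum_negf[symmetric] by (intro sum.cong refl) (use T in auto)
    also have "(\<Sum>k<N. f (?c (Suc k)) * a (int n - int (Suc k))) = (\<Sum>k<N. f (?c (Suc (N - Suc k))) * a (int n - int (Suc (N - Suc k))))"
      by (rule sum.nat_diff_reindex[symmetric])
    also have "\<dots> = (\<Sum>k<N. f (?c (n - Suc k)) * a (int (Suc k)))"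
      by (intro sum.cong refl) (auto simp: N Suc_diff_Suc of_nat_diff)
    finally have C: "a 0 + (\<Sum>k<N. f (?c (n - Suc k)) * a (int (Suc k))) = f (?c 0) * (\<Sum>l<n. ?c l * a (int l))"
      by (simp add: mult.commute)
    have "(\<Sum>j<n. f (?c (n - j)) * a (int j)) = f (?c n) * a 0 + (\<Sum>k<N. f (?c (n - Suc k)) * a (int (Suc k)))"
      unfolding N by (subst sum.lessThan_Suc_shift) simp
    also have "f (?c n) = 1" using mon dn inv_basic[OF inv] by simp
    finally have "(\<Sum>j<n. f (?c (n - j)) * a (int j)) = f (?c 0) * (\<Sum>l<n. ?c l * a (int l))"
      using C by simp
    thus ?thesis using True unfolding Y_def
      by (simp add: algebra_simps sum_subtractf sum_distrib_left)
  qed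
  have Xv: "?X *\<^sub>v vec n Y = 0\<^sub>v n"
  proof (rule eq_vecI)
    fix i assume "i < dim_vec (0\<^sub>v n :: 'a vec)"
    hence i: "i < n" by simp
    have "(?X *\<^sub>v vec n Y) $ i = (\<Sum>j<n. a (int j - int i) * Y j)"
      using i by (simp add: toeplitz_mat_def scalar_prod_def atLeast0LessThan)
    thus "(?X *\<^sub>v vec n Y) $ i = 0\<^sub>v n $ i" using entry[OF i] i by simp
  qed (simp add: toeplitz_mat_def)
  have "vec n Y = 0\<^sub>v n"
  proof -
    have "\<not> (\<exists>v. v \<in> carrier_vec n \<and> v \<noteq> 0\<^sub>v n \<and> ?X *\<^sub>v v = 0\<^sub>v n)"
      using dt det_0_iff_vec_prod_zero[OF toep_carrier[of n a]] by blast
    moreover have "vec n Y \<in> carrier_vec n" by simp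
    ultimately show ?thesis using Xv by blast
  qed
  hence Yl: "Y k = 0" if "k < n" for k
  proof -
    have "vec n Y $ k = 0\<^sub>v n $ k" using \<open>vec n Y = 0\<^sub>v n\<close> by simp
    thus ?thesis using that by simp
  qed
  have "Y k = 0"
  proof (cases "k = n")
    case True thus ?thesis unfolding Y_def using mon dn by simp
  next
    case False thus ?thesis using k Yl by simp
  qed
  thus ?thesis unfolding Y_def by simp
qed



definition lam :: "'a::field poly \<Rightarrow> (int \<Rightarrow> 'a) \<Rightarrow> 'a poly \<Rightarrow> 'a" where
  "lam chi a g = (\<Sum>k<degree chi. coeff (g mod chi) k * a (1 - int (degree chi) + int k))"

lemma lam_add: "lam chi a (g + h) = lam chi a g + lam chi a h"
  unfolding lam_def by (simp add: poly_mod_add_left algebra_simps sum.distrib)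

lemma lam_diff: "lam chi a (g - h) = lam chi a g - lam chi a h"
  unfolding lam_def by (simp add: poly_mod_diff_left algebra_simps sum_subtractf)

lemma lam_smult: "lam chi a (smult c g) = c * lam chi a g"
  unfolding lam_def by (simp add: mod_smult_left sum_distrib_left algebra_simps)

lemma lam_mod: "lam chi a (g mod chi) = lam chi a g"
  unfolding lam_def by simp

lemma lam_chi: "lam chi a (h * chi) = 0"
  unfolding lam_def by simp

lemma lam_sum: "lam chi a (\<Sum>i\<in>A. F i) = (\<Sum>i\<in>A. lam chi a (F i))"
proof (induction A rule: infinite_finite_induct)
  case (insert x F) thus ?case by (simp add: lam_add)
qed (auto simp: lam_def)

lemma lam_monom:
  assumes rec: "recurrent chi a (1 - int n) (int n - 1)" and dn: "degree chi = n"
    and mon: "lead_coeff chi = 1" and n1: "n \<ge> 1"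
  shows "t \<le> 2 * n - 2 \<Longrightarrow> lam chi a (monom 1 t) = a (1 - int n + int t)"
proof (induction t rule: less_induct)
  case (less t)
  show ?case
  proof (cases "t < n")
    case True
    hence "monom 1 t mod chi = (monom 1 t :: 'a poly)" using dn n1
      by (intro mod_poly_less) (simp add: degree_monom_eq)
    hence "lam chi a (monom 1 t) = (\<Sum>k<n. coeff (monom 1 t) k * a (1 - int n + int k))"
      unfolding lam_def dn by simp
    also have "\<dots> = (\<Sum>k<n. (if k = t then a (1 - int n + int t) else 0))"
      by (intro sum.cong refl) (simp add: coeff_monom)
    also have "\<dots> = a (1 - int n + int t)" using True by simp
    finally show ?thesis .
  next
    case False
    have chiexp: "chi = monom 1 n + (\<Sum>i<n. monom (coeff chi i) i)"
      using poly_as_sum_of_monoms[of chi] mon dn by (simp add: sum_atMost_last add.commute)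
    have "monom 1 t = monom 1 (t - n) * monom (1::'a) n" using False by (simp add: mult_monom)
    also have "monom (1::'a) n = chi - (\<Sum>i<n. monom (coeff chi i) i)" using chiexp by (simp add: algebra_simps)
    finally have "monom 1 t = monom 1 (t - n) * chi - (\<Sum>i<n. smult (coeff chi i) (monom 1 (t - n + i)))"
      by (simp add: algebra_simps sum_distrib_left mult_monom smult_monom)
    hence "lam chi a (monom 1 t) = - (\<Sum>i<n. coeff chi i * lam chi a (monom 1 (t - n + i)))"
      by (simp add: lam_diff lam_chi[of chi a "monom 1 (t - n)"] lam_sum lam_smult)
    also have "\<dots> = - (\<Sum>i<n. coeff chi i * a ((1 - int n + int (t - n)) + int i))"
    proof -
      have "\<And>i. i < n \<Longrightarrow> lam chi a (monom 1 (t - n + i)) = a ((1 - int n + int (t - n)) + int i)"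
        using less.IH less.prems False n1 by (subst less.IH) (auto simp: algebra_simps)
      thus ?thesis by simp
    qed
    also have "\<dots> = a (1 - int n + int (t - n) + int n)"
      using rec_L1[OF rec dn mon, of "1 - int n + int (t - n)"] less.prems False n1 by (simp add: of_nat_diff)
    finally show ?thesis using False by (simp add: of_nat_diff algebra_simps)
  qed
qed

lemma lam_window:
  assumes rec: "recurrent chi a (1 - int n) (int n - 1)" and dn: "degree chi = n"
    and mon: "lead_coeff chi = 1" and n1: "n \<ge> 1" and l: "l + degree h \<le> 2 * n - 2"
  shows "(\<Sum>k\<le>degree h. coeff h k * a (1 - int n + int l + int k)) = lam chi a (monom 1 l * h)"
proof -
  have "monom 1 l * h = monom 1 l * (\<Sum>k\<le>degree h. monom (coeff h k) k)"
    by (simp add: poly_as_sum_of_monoms)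
  also have "\<dots> = (\<Sum>k\<le>degree h. smult (coeff h k) (monom 1 (l + k)))"
    by (simp add: sum_distrib_left mult_monom smult_monom)
  finally have "lam chi a (monom 1 l * h) = (\<Sum>k\<le>degree h. coeff h k * lam chi a (monom 1 (l + k)))"
    by (simp add: lam_sum lam_smult)
  also have "\<dots> = (\<Sum>k\<le>degree h. coeff h k * a (1 - int n + int l + int k))"
    by (intro sum.cong refl) (use l in \<open>simp add: lam_monom[OF rec dn mon n1] algebra_simps\<close>)
  finally show ?thesis by simp
qed



lemma sum_coeff_extend:
  fixes h :: "'a::comm_ring_1 poly"
  assumes "degree h < N"
  shows "(\<Sum>k\<le>degree h. coeff h k * g k) = (\<Sum>k<N. coeff h k * g k)"
proof (rule sum.mono_neutral_left)
  show "\<forall>i\<in>{..<N} - {..degree h}. coeff h i * g i = 0" by (simp add: coeff_eq_0 not_le)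
qed (use assms in auto)

lemma ex_irred_factor:
  fixes D :: "'a::field poly"
  shows "D \<noteq> 0 \<Longrightarrow> \<not> is_unit D \<Longrightarrow> \<exists>q. irreducible q \<and> q dvd D"
proof (induction "degree D" arbitrary: D rule: less_induct)
  case less
  show ?case
  proof (cases "irreducible D")
    case True thus ?thesis using dvd_refl by blast
  next
    case False
    then obtain a b where ab: "D = a * b" "\<not> is_unit a" "\<not> is_unit b"
      using less.prems unfolding irreducible_def by blast
    have a0: "a \<noteq> 0" and b0: "b \<noteq> 0" using ab less.prems by auto
    have "degree b \<noteq> 0" using ab(3) b0 is_unit_iff_degree by blast
    hence "degree a < degree D" using ab(1) a0 b0 by (simp add: degree_mult_eq)
    then obtain q where "irreducible q" "q dvd a" using less.hyps[of a] a0 ab(2) by blast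
    thus ?thesis using ab(1) by auto
  qed
qed

lemma not_dvd_unit:
  fixes p D :: "'a::field poly"
  assumes pi: "irreducible p" and D: "D dvd p ^ s" and nd: "\<not> p dvd D"
  shows "is_unit D"
proof (rule ccontr)
  assume nu: "\<not> is_unit D"
  have "D \<noteq> 0" using D pi by (auto simp: irreducible_def)
  then obtain q where q: "irreducible q" "q dvd D" using ex_irred_factor nu by blast
  have "prime_elem q" using q(1) by (rule field_poly_irreducible_imp_prime)
  moreover have "q dvd p ^ s" using q(2) D by (rule dvd_trans)
  ultimately have "q dvd p" by (rule prime_elem_dvd_power)
  then obtain r where r: "p = q * r" by auto
  have "\<not> is_unit q" using q(1) by (auto simp: irreducible_def)
  hence "is_unit r" using pi r unfolding irreducible_def by blast
  hence "p dvd q" using r by (simp add: dvd_mult_unit_iff)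
  thus False using nd q(2) dvd_trans by blast
qed

lemma dvd_prime_power_pred:
  fixes p D :: "'a::field poly"
  assumes pi: "irreducible p"
  shows "D dvd p ^ s \<Longrightarrow> degree D < degree (p ^ s) \<Longrightarrow> D dvd p ^ (s - 1)"
proof (induction s arbitrary: D)
  case 0 thus ?case by simp
next
  case (Suc s)
  have p0: "p \<noteq> 0" using pi by (auto simp: irreducible_def)
  show ?case
  proof (cases "p dvd D")
    case False
    hence "is_unit D" using not_dvd_unit[OF pi Suc.prems(1)] by blast
    thus ?thesis by (simp add: unit_imp_dvd)
  next
    case True
    then obtain D' where D': "D = p * D'" by auto
    have "D' dvd p ^ s" using Suc.prems(1) D' p0 by simp
    have D'0: "D' \<noteq> 0" using D' Suc.prems pi by (auto simp: irreducible_def)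
    have "degree D' < degree (p ^ s)" using Suc.prems(2) D' p0 D'0
      by (simp add: degree_mult_eq degree_power_eq)
    hence "s \<noteq> 0" by (metis degree_1 not_less0 power_0)
    have "D' dvd p ^ (s - 1)" using Suc.IH \<open>D' dvd p ^ s\<close> \<open>degree D' < degree (p ^ s)\<close> by blast
    hence "p * D' dvd p * p ^ (s - 1)" by simp
    thus ?thesis using D' \<open>s \<noteq> 0\<close> by (cases s) auto
  qed
qed

lemma sing_crit:
  assumes rec: "recurrent chi a (1 - int n) (int n - 1)" and dn: "degree chi = n"
    and mon: "lead_coeff chi = 1" and n1: "n \<ge> 1"
    and pm: "lead_coeff p = 1" and pi: "irreducible p" and chi: "chi = p ^ s"
    and dt: "det (toeplitz_mat n a) = 0"
  shows "lam chi a (h * p ^ (s - 1)) = 0"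
proof -
  let ?X = "toeplitz_mat n a"
  obtain v where v: "v \<in> carrier_vec n" "v \<noteq> 0\<^sub>v n" "?X *\<^sub>v v = 0\<^sub>v n"
    using dt det_0_iff_vec_prod_zero[OF toep_carrier[of n a]] by blast
  define Y where "Y = Poly (map (\<lambda>j. v $ j) [0..<n])"
  have cY: "coeff Y k = (if k < n then v $ k else 0)" for k
    unfolding Y_def by (simp add: nth_default_def)
  have dY: "degree Y < n"
  proof -
    have "degree Y \<le> n - 1" by (rule degree_le) (auto simp: cY)
    thus ?thesis using n1 by simp
  qed
  have Y0: "Y \<noteq> 0"
  proof
    assume "Y = 0"
    hence "v $ k = 0" if "k < n" for k using cY[of k] that by simp
    hence "v = 0\<^sub>v n" using v(1) by (intro eq_vecI) auto
    thus False using v(2) by simp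
  qed
  have Ywin: "lam chi a (monom 1 l * Y) = 0" if l: "l < n" for l
  proof -
    have "lam chi a (monom 1 l * Y) = (\<Sum>k\<le>degree Y. coeff Y k * a (1 - int n + int l + int k))"
      by (rule lam_window[OF rec dn mon n1, symmetric]) (use l dY in auto)
    also have "\<dots> = (\<Sum>k<n. coeff Y k * a (1 - int n + int l + int k))"
      by (rule sum_coeff_extend[OF dY])
    also have "\<dots> = (\<Sum>k<n. a (int k - int (n - 1 - l)) * v $ k)"
      by (intro sum.cong refl) (use l in \<open>auto simp: cY of_nat_diff algebra_simps\<close>)
    also have "\<dots> = (?X *\<^sub>v v) $ (n - 1 - l)"
      using l v(1) by (simp add: toeplitz_mat_def scalar_prod_def atLeast0LessThan)
    also have "\<dots> = 0" using v(3) l by simp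
    finally show ?thesis .
  qed
  have chi0: "chi \<noteq> 0" using mon by auto
  have YAnn: "lam chi a (g * Y) = 0" for g
  proof -
    define r where "r = g mod chi"
    have "lam chi a (g * Y) = lam chi a ((g * Y) mod chi)" by (simp add: lam_mod)
    also have "(g * Y) mod chi = (r * Y) mod chi" unfolding r_def by (simp add: mod_mult_left_eq)
    also have "lam chi a ((r * Y) mod chi) = lam chi a (r * Y)" by (simp add: lam_mod)
    also have "r * Y = (\<Sum>l\<le>degree r. smult (coeff r l) (monom 1 l * Y))"
    proof -
      have e: "monom c l * Y = smult c (monom 1 l * Y)" for c l
        by (metis mult_smult_left smult_monom mult.right_neutral)
      show ?thesis by (subst (1) poly_as_sum_of_monoms[of r, symmetric]) (unfold sum_distrib_right, intro sum.cong refl, rule e)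
    qed
    also have "lam chi a \<dots> = (\<Sum>l\<le>degree r. coeff r l * lam chi a (monom 1 l * Y))"
      by (simp add: lam_sum lam_smult)
    also have "\<dots> = 0"
    proof (cases "r = 0")
      case True thus ?thesis by simp
    next
      case False
      hence "degree r < n" using degree_mod_less'[OF chi0, of g] dn unfolding r_def by simp
      thus ?thesis by (intro sum.neutral) (auto simp: Ywin)
    qed
    finally show ?thesis .
  qed
  define P where "P g = (\<forall>h. lam chi a (h * g) = 0)" for g
  have PY: "P Y" unfolding P_def using YAnn by blast
  have "\<exists>m. \<exists>g. P g \<and> g \<noteq> 0 \<and> degree g = m" using PY Y0 by blast
  define m where "m = (LEAST m. \<exists>g. P g \<and> g \<noteq> 0 \<and> degree g = m)"
  obtain D where D: "P D" "D \<noteq> 0" "degree D = m"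
    using LeastI_ex[OF \<open>\<exists>m. \<exists>g. P g \<and> g \<noteq> 0 \<and> degree g = m\<close>] unfolding m_def[symmetric] by blast
  have Dmin: "m \<le> degree g" if "P g" "g \<noteq> 0" for g
    unfolding m_def using that by (intro Least_le) blast
  have "degree D \<le> degree Y" using Dmin[OF PY Y0] D by simp
  have Pchi: "P chi" unfolding P_def by (simp add: lam_chi)
  have "P (chi mod D)"
  proof -
    have "chi mod D = chi - (chi div D) * D" by (simp add: mod_div_mult_eq[symmetric] algebra_simps)
    thus ?thesis using Pchi D(1) unfolding P_def
      by (simp add: right_diff_distrib lam_diff mult.assoc[symmetric])
  qed
  have "chi mod D = 0"
  proof (rule ccontr)
    assume ne: "chi mod D \<noteq> 0"
    have "degree (chi mod D) < degree D" using degree_mod_less'[OF D(2) ne] .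
    thus False using Dmin[OF \<open>P (chi mod D)\<close> ne] D(3) by simp
  qed
  hence "D dvd p ^ s" using chi by (simp add: dvd_eq_mod_eq_0)
  moreover have "degree D < degree (p ^ s)" using \<open>degree D \<le> degree Y\<close> dY dn chi by simp
  ultimately have "D dvd p ^ (s - 1)" by (rule dvd_prime_power_pred[OF pi])
  then obtain E where "p ^ (s - 1) = D * E" by auto
  thus ?thesis using D(1) unfolding P_def by (metis mult.assoc mult.commute)
qed

lemma sing_window:
  assumes rec: "recurrent chi a (1 - int n) (int n - 1)" and dn: "degree chi = n"
    and mon: "lead_coeff chi = 1" and n1: "n \<ge> 1"
    and pm: "lead_coeff p = 1" and pi: "irreducible p" and chi: "chi = p ^ s"
    and dt: "det (toeplitz_mat n a) = 0"
    and l: "1 - int n \<le> l" "l + int (degree (p ^ (s - 1))) \<le> int n - 1"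
  shows "(\<Sum>k\<le>degree (p ^ (s - 1)). coeff (p ^ (s - 1)) k * a (l + int k)) = 0"
proof -
  define l' where "l' = nat (l - (1 - int n))"
  have l': "l = 1 - int n + int l'" "l' + degree (p ^ (s - 1)) \<le> 2 * n - 2"
    using l n1 unfolding l'_def by auto
  have "(\<Sum>k\<le>degree (p ^ (s - 1)). coeff (p ^ (s - 1)) k * a (l + int k)) = lam chi a (monom 1 l' * p ^ (s - 1))"
    unfolding l'(1) by (rule lam_window[OF rec dn mon n1 l'(2)])
  thus ?thesis using sing_crit[OF rec dn mon n1 pm pi chi dt] by simp
qed



definition Lw :: "'a::field poly \<Rightarrow> (int \<Rightarrow> 'a) \<Rightarrow> int \<Rightarrow> 'a poly \<Rightarrow> 'a" where
  "Lw chi w s0 g = (\<Sum>k<degree chi. coeff (g mod chi) k * w (s0 + int k))"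

lemma Lw_add: "Lw chi w s0 (g + h) = Lw chi w s0 g + Lw chi w s0 h"
  unfolding Lw_def by (simp add: poly_mod_add_left algebra_simps sum.distrib)

lemma Lw_diff: "Lw chi w s0 (g - h) = Lw chi w s0 g - Lw chi w s0 h"
  unfolding Lw_def by (simp add: poly_mod_diff_left algebra_simps sum_subtractf)

lemma Lw_smult: "Lw chi w s0 (smult c g) = c * Lw chi w s0 g"
  unfolding Lw_def by (simp add: mod_smult_left sum_distrib_left algebra_simps)

lemma Lw_modeq: "g mod chi = h mod chi \<Longrightarrow> Lw chi w s0 g = Lw chi w s0 h"
  unfolding Lw_def by simp

lemma Lw_chi: "Lw chi w s0 (h * chi) = 0"
  unfolding Lw_def by simp

lemma Lw_sum: "Lw chi w s0 (\<Sum>i\<in>A. F i) = (\<Sum>i\<in>A. Lw chi w s0 (F i))"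
proof (induction A rule: infinite_finite_induct)
  case (insert x F) thus ?case by (simp add: Lw_add)
qed (auto simp: Lw_def)

lemma Lw_low: "t < degree chi \<Longrightarrow> Lw chi w s0 (monom 1 t) = w (s0 + int t)"
proof -
  assume t: "t < degree chi"
  hence "monom 1 t mod chi = (monom 1 t :: 'a poly)"
    by (intro mod_poly_less) (simp add: degree_monom_eq)
  hence "Lw chi w s0 (monom 1 t) = (\<Sum>k<degree chi. coeff (monom 1 t) k * w (s0 + int k))"
    unfolding Lw_def by simp
  also have "\<dots> = (\<Sum>k<degree chi. (if k = t then w (s0 + int t) else 0))"
    by (intro sum.cong refl) (simp add: coeff_monom)
  also have "\<dots> = w (s0 + int t)" using t by simp
  finally show ?thesis .
qed

lemma chi_expand:
  assumes mon: "lead_coeff chi = 1" and dn: "degree chi = n"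
  shows "chi = monom 1 n + (\<Sum>i<n. monom (coeff chi i) i)"
  using poly_as_sum_of_monoms[of chi] mon dn by (simp add: sum_atMost_last add.commute)

lemma Lw_top:
  assumes mon: "lead_coeff chi = 1" and dn: "degree chi = n"
  shows "Lw chi w s0 (monom 1 n) = - (\<Sum>i<n. coeff chi i * w (s0 + int i))"
proof -
  have "monom (1::'a) n = chi - (\<Sum>i<n. smult (coeff chi i) (monom 1 i))"
    using chi_expand[OF mon dn] by (simp add: algebra_simps smult_monom)
  hence "Lw chi w s0 (monom 1 n) = - (\<Sum>i<n. coeff chi i * Lw chi w s0 (monom 1 i))"
    using Lw_chi[of chi w s0 1] by (simp add: Lw_diff Lw_sum Lw_smult)
  also have "\<dots> = - (\<Sum>i<n. coeff chi i * w (s0 + int i))"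
    using Lw_low[of _ chi w s0] dn by simp
  finally show ?thesis .
qed

definition uinv :: "'a::field poly \<Rightarrow> 'a poly" where
  "uinv chi = smult (- inverse (coeff chi 0)) (\<Sum>i<degree chi. monom (coeff chi (Suc i)) i)"

lemma uinv_prop:
  assumes mon: "lead_coeff chi = 1" and c0: "coeff chi 0 \<noteq> 0"
  shows "monom 1 1 * uinv chi = 1 - smult (inverse (coeff chi 0)) chi"
proof -
  let ?n = "degree chi" and ?c = "coeff chi"
  have "chi = (\<Sum>i\<le>?n. monom (?c i) i)" by (simp add: poly_as_sum_of_monoms)
  also have "\<dots> = monom (?c 0) 0 + (\<Sum>i<?n. monom (?c (Suc i)) (Suc i))"
    by (simp add: sum.atMost_shift)
  also have "(\<Sum>i<?n. monom (?c (Suc i)) (Suc i)) = monom 1 1 * (\<Sum>i<?n. monom (?c (Suc i)) i)"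
    by (simp add: sum_distrib_left mult_monom)
  finally have e: "chi = [:?c 0:] + monom 1 1 * (\<Sum>i<?n. monom (?c (Suc i)) i)"
    by (simp add: monom_0)
  show ?thesis unfolding uinv_def
    by (subst (2) e) (simp add: c0 algebra_simps smult_add_right flip: mult_smult_right)
qed

definition zpow :: "'a::field poly \<Rightarrow> int \<Rightarrow> 'a poly" where
  "zpow chi t = (if t \<ge> 0 then monom 1 (nat t) else uinv chi ^ nat (- t))"

lemma zpow_step:
  assumes mon: "lead_coeff chi = 1" and c0: "coeff chi 0 \<noteq> 0"
  shows "(monom 1 1 * zpow chi t) mod chi = zpow chi (t + 1) mod chi"
proof (cases "t \<ge> 0")
  case True thus ?thesis by (simp add: zpow_def mult_monom nat_add_distrib add.commute)
next
  case False
  define k where "k = nat (- t - 1)"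
  have t: "nat (- t) = Suc k" using False unfolding k_def by auto
  have "monom 1 1 * zpow chi t = (monom 1 1 * uinv chi) * uinv chi ^ k"
    using False t by (simp add: zpow_def mult.assoc)
  also have "\<dots> = uinv chi ^ k - smult (inverse (coeff chi 0)) (uinv chi ^ k) * chi"
    by (subst uinv_prop[OF mon c0]) (simp add: algebra_simps)
  finally have "(monom 1 1 * zpow chi t) mod chi = (uinv chi ^ k) mod chi"
    by (simp add: poly_mod_diff_left mod_smult_left)
  moreover have "zpow chi (t + 1) = (if t + 1 = 0 then 1 else uinv chi ^ k)"
    using False unfolding zpow_def k_def by (auto simp: nat_diff_distrib)
  moreover have "t + 1 = 0 \<Longrightarrow> k = 0" using False unfolding k_def by auto
  ultimately show ?thesis by auto
qed

lemma zpow_shift: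
  assumes mon: "lead_coeff chi = 1" and c0: "coeff chi 0 \<noteq> 0"
  shows "(monom 1 i * zpow chi t) mod chi = zpow chi (t + int i) mod chi"
proof (induction i)
  case 0 thus ?case by (simp add: monom_0)
next
  case (Suc i)
  have "monom 1 (Suc i) * zpow chi t = monom 1 1 * (monom 1 i * zpow chi t)"
    by (simp add: mult_monom mult.assoc[symmetric])
  hence "(monom 1 (Suc i) * zpow chi t) mod chi = (monom 1 1 * (zpow chi (t + int i) mod chi)) mod chi"
    using Suc.IH by (metis mod_mult_right_eq)
  also have "\<dots> = (monom 1 1 * zpow chi (t + int i)) mod chi" by (simp add: mod_mult_right_eq)
  also have "\<dots> = zpow chi ((t + int i) + 1) mod chi" by (rule zpow_step[OF mon c0])
  also have "(t + int i) + 1 = t + int (Suc i)" by simp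
  finally show ?case .
qed

definition ext_seq :: "'a::field poly \<Rightarrow> (int \<Rightarrow> 'a) \<Rightarrow> int \<Rightarrow> int \<Rightarrow> 'a" where
  "ext_seq chi w s0 x = Lw chi w s0 (zpow chi (x - s0))"

lemma ext_rec:
  assumes mon: "lead_coeff chi = 1" and c0: "coeff chi 0 \<noteq> 0"
  shows "(\<Sum>i\<le>degree chi. coeff chi i * ext_seq chi w s0 (l + int i)) = 0"
proof -
  let ?z = "zpow chi (l - s0)"
  have "(\<Sum>i\<le>degree chi. coeff chi i * ext_seq chi w s0 (l + int i)) =
     (\<Sum>i\<le>degree chi. coeff chi i * Lw chi w s0 (monom 1 i * ?z))"
  proof (intro sum.cong refl)
    fix i
    have "Lw chi w s0 (zpow chi (l + int i - s0)) = Lw chi w s0 (monom 1 i * ?z)"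
      by (rule Lw_modeq) (simp add: zpow_shift[OF mon c0] algebra_simps)
    thus "coeff chi i * ext_seq chi w s0 (l + int i) = coeff chi i * Lw chi w s0 (monom 1 i * ?z)"
      unfolding ext_seq_def by simp
  qed
  also have "\<dots> = Lw chi w s0 ((\<Sum>i\<le>degree chi. monom (coeff chi i) i) * ?z)"
  proof -
    have e: "monom c i * Y = smult c (monom 1 i * Y)" for c i and Y :: "'a poly"
      by (metis mult_smult_left smult_monom mult.right_neutral)
    show ?thesis unfolding sum_distrib_right Lw_sum
    proof (intro sum.cong refl)
      fix i
      show "coeff chi i * Lw chi w s0 (monom 1 i * ?z) = Lw chi w s0 (monom (coeff chi i) i * ?z)"
        by (subst e[of "coeff chi i" i]) (rule Lw_smult[symmetric])
    qed
  qed
  also have "\<dots> = 0" by (simp add: poly_as_sum_of_monoms Lw_chi[of chi w s0 ?z, simplified mult.commute])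
  finally show ?thesis .
qed

lemma ext_agree:
  assumes "0 \<le> t" "t < int (degree chi)"
  shows "ext_seq chi w s0 (s0 + t) = w (s0 + t)"
  using Lw_low[of "nat t" chi w s0] assms unfolding ext_seq_def zpow_def by simp

lemma ext_agree_top:
  assumes mon: "lead_coeff chi = 1" and dn: "degree chi = n"
  shows "ext_seq chi w s0 (s0 + int n) = - (\<Sum>i<n. coeff chi i * w (s0 + int i))"
  using Lw_top[OF mon dn, of w s0] unfolding ext_seq_def zpow_def by simp



lemma rec_unique:
  assumes mon: "lead_coeff chi = 1" and dn: "degree chi = n" and c0: "coeff chi 0 \<noteq> 0"
    and ra: "recurrent chi a (1 - int n) (int n - 1)" and rb: "recurrent chi b (1 - int n) (int n - 1)"
    and s: "1 - int n \<le> s" "s \<le> 0"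
    and ag: "\<And>t. 0 \<le> t \<Longrightarrow> t < int n \<Longrightarrow> a (s + t) = b (s + t)"
    and x: "1 - int n \<le> x" "x \<le> int n - 1"
  shows "a x = b x"
proof -
  define D where "D y = a y - b y" for y
  have rD: "(\<Sum>i\<le>n. coeff chi i * D (l + int i)) = 0" if "1 - int n \<le> l" "l \<le> -1" for l
  proof -
    have "(\<Sum>i\<le>n. coeff chi i * a (l + int i)) = 0" "(\<Sum>i\<le>n. coeff chi i * b (l + int i)) = 0"
      using ra rb that dn unfolding recurrent_def by auto
    thus ?thesis unfolding D_def by (simp add: algebra_simps sum_subtractf)
  qed
  have up: "\<And>t. s + int t \<le> int n - 1 \<Longrightarrow> D (s + int t) = 0"
  proof -
    fix t show "s + int t \<le> int n - 1 \<Longrightarrow> D (s + int t) = 0"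
    proof (induction t rule: less_induct)
      case (less t)
      show ?case
      proof (cases "t < n")
        case True thus ?thesis using ag[of "int t"] unfolding D_def by simp
      next
        case False
        define l where "l = s + int t - int n"
        have l: "1 - int n \<le> l" "l \<le> -1" using less.prems False s unfolding l_def by auto
        have "(\<Sum>i\<le>n. coeff chi i * D (l + int i)) = 0" by (rule rD[OF l])
        moreover have "(\<Sum>i<n. coeff chi i * D (l + int i)) = 0"
        proof (intro sum.neutral ballI)
          fix i assume i: "i \<in> {..<n}"
          have "D (s + int (t - n + i)) = 0" using less.IH[of "t - n + i"] i False less.prems by auto
          moreover have "s + int (t - n + i) = l + int i" using False unfolding l_def by auto
          ultimately show "coeff chi i * D (l + int i) = 0" by (metis mult_zero_right)
        qed
        ultimately have "coeff chi n * D (l + int n) = 0" by (simp add: sum_atMost_last)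
        thus ?thesis using mon dn unfolding l_def by simp
      qed
    qed
  qed
  have down: "\<And>t. 1 - int n \<le> s - int t \<Longrightarrow> D (s - int t) = 0"
  proof -
    fix t show "1 - int n \<le> s - int t \<Longrightarrow> D (s - int t) = 0"
    proof (induction t rule: less_induct)
      case (less t)
      show ?case
      proof (cases "t = 0")
        case True thus ?thesis using ag[of 0] dn mon s unfolding D_def by (cases n) auto
      next
        case False
        define l where "l = s - int t"
        have l: "1 - int n \<le> l" "l \<le> -1" using less.prems False s unfolding l_def by auto
        have "(\<Sum>i\<le>n. coeff chi i * D (l + int i)) = 0" by (rule rD[OF l])
        moreover have "(\<Sum>i<n. coeff chi (Suc i) * D (l + int (Suc i))) = 0"
        proof (intro sum.neutral ballI)
          fix i assume i: "i \<in> {..<n}"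
          have "D (l + int (Suc i)) = 0"
          proof (cases "Suc i \<le> t")
            case True
            have "D (s - int (t - Suc i)) = 0" using less.IH[of "t - Suc i"] True False less.prems by auto
            moreover have "s - int (t - Suc i) = l + int (Suc i)" using True unfolding l_def by auto
            ultimately show ?thesis by simp
          next
            case F: False
            have "l + int (Suc i) = s + (int (Suc i) - int t)" unfolding l_def by simp
            moreover have "a (s + (int (Suc i) - int t)) = b (s + (int (Suc i) - int t))"
              using ag i F False by auto
            ultimately show ?thesis unfolding D_def by (metis diff_self)
          qed
          thus "coeff chi (Suc i) * D (l + int (Suc i)) = 0" by simp
        qed
        ultimately have "coeff chi 0 * D l = 0" by (simp add: sum.atMost_shift)
        thus ?thesis using c0 unfolding l_def by simp
      qed
    qed
  qed
  show ?thesis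
  proof (cases "x \<ge> s")
    case True thus ?thesis using up[of "nat (x - s)"] x unfolding D_def by simp
  next
    case False thus ?thesis using down[of "nat (s - x)"] x unfolding D_def by simp
  qed
qed

lemma eps_props:
  assumes inv: "is_involution f" and eps: "eps = 1 \<or> eps = -1"
  shows "f eps = eps" "eps * eps = 1"
  using eps inv_basic[OF inv] by auto

lemma sym_ext:
  assumes inv: "is_involution f" and mon: "lead_coeff chi = 1" and dn: "degree chi = n" and n1: "n \<ge> 1"
    and R: "\<And>k. k \<le> n \<Longrightarrow> f (coeff chi (n - k)) = f (coeff chi 0) * coeff chi k"
    and eps: "eps = 1 \<or> eps = -1"
    and rec: "recurrent chi a (1 - int n) (int n - 1)"
    and m: "n \<le> 2 * m + 1" "m \<le> n - 1"
    and fsym: "\<And>t. \<bar>t\<bar> \<le> int m \<Longrightarrow> a (- t) = eps * f (a t)"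
    and t: "\<bar>t\<bar> \<le> int n - 1"
  shows "a (- t) = eps * f (a t)"
proof -
  let ?c = "coeff chi"
  have R': "f (?c k) = f (?c 0) * ?c (n - k)" if "k \<le> n" for k
  proof -
    have "f (?c (n - (n - k))) = f (?c 0) * ?c (n - k)" using R[of "n - k"] by simp
    thus ?thesis using that by simp
  qed
  have f0c0: "f (?c 0) * ?c 0 = 1" using R[of 0] mon dn inv_basic[OF inv] by simp
  hence c0: "?c 0 \<noteq> 0" by auto
  note ib = inv_basic[OF inv]
  define b where "b y = eps * f (a (- y))" for y
  have rb: "recurrent chi b (1 - int n) (int n - 1)"
    unfolding recurrent_def
  proof (intro allI impI)
    fix l assume l: "1 - int n \<le> l \<and> l \<le> int n - 1 - int (degree chi)"
    have "(\<Sum>i\<le>n. f (?c i) * a (- l - int i)) = (\<Sum>i\<le>n. f (?c 0) * (?c (n - i) * a (- l - int i)))"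
    proof (intro sum.cong refl)
      fix i assume "i \<in> {..n}"
      hence "f (?c i) = f (?c 0) * ?c (n - i)" using R'[of i] by simp
      thus "f (?c i) * a (- l - int i) = f (?c 0) * (?c (n - i) * a (- l - int i))" by simp
    qed
    also have "\<dots> = f (?c 0) * (\<Sum>i<Suc n. ?c (n - i) * a (- l - int i))"
      by (simp add: sum_distrib_left lessThan_Suc_atMost)
    also have "(\<Sum>i<Suc n. ?c (n - i) * a (- l - int i)) = (\<Sum>i<Suc n. ?c (n - (n - i)) * a (- l - int (n - i)))"
      by (subst sum.nat_diff_reindex[symmetric]) simp
    also have "\<dots> = (\<Sum>i\<le>n. ?c i * a ((- l - int n) + int i))"
      unfolding lessThan_Suc_atMost by (intro sum.cong refl) (auto simp: of_nat_diff algebra_simps)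
    also have "\<dots> = 0" using rec l dn unfolding recurrent_def by auto
    finally have z: "(\<Sum>i\<le>n. f (?c i) * a (- l - int i)) = 0" by simp
    have "(\<Sum>i\<le>degree chi. ?c i * b (l + int i)) = eps * f (\<Sum>i\<le>n. f (?c i) * a (- l - int i))"
      unfolding b_def dn by (simp add: inv_sum[OF inv] ib sum_distrib_left algebra_simps)
    thus "(\<Sum>i\<le>degree chi. ?c i * b (l + int i)) = 0" using z ib by simp
  qed
  have "a (- t) = b (- t)"
  proof (rule rec_unique[OF mon dn c0 rec rb, of "- int m"])
    fix u :: int assume u: "0 \<le> u" "u < int n"
    have "\<bar>- int m + u\<bar> \<le> int m" using u m by auto
    hence "a (- int m + u) = eps * f (a (- (- int m + u)))" using fsym[of "- (- int m + u)"] by simp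
    thus "a (- int m + u) = b (- int m + u)" unfolding b_def by simp
  qed (use m t n1 in auto)
  also have "\<dots> = eps * f (a t)" unfolding b_def by simp
  finally show ?thesis .
qed



lemma frag_works_gen:
  assumes inv: "is_involution f" and mon: "lead_coeff chi = 1" and dn: "degree chi = n" and n1: "n \<ge> 1"
    and R: "\<And>k. k \<le> n \<Longrightarrow> f (coeff chi (n - k)) = f (coeff chi 0) * coeff chi k"
    and eps: "eps = 1 \<or> eps = -1"
    and m: "n \<le> 2 * m + 1" "2 * m \<le> n"
    and vsym: "\<And>t. \<bar>t\<bar> \<le> int m \<Longrightarrow> v (- t) = eps * f (v t)"
    and cons: "2 * m = n \<Longrightarrow> (\<Sum>i\<le>n. coeff chi i * v (- int m + int i)) = 0"
    and nonsing: "\<And>a. recurrent chi a (1 - int n) (int n - 1) \<Longrightarrow>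
        (\<forall>i. - int m \<le> i \<and> i \<le> int m \<longrightarrow> a i = v i) \<Longrightarrow> det (toeplitz_mat n a) \<noteq> 0"
  shows "fragment_works f eps chi (frobenius_block chi) m v"
proof -
  let ?c = "coeff chi"
  have f0c0: "f (?c 0) * ?c 0 = 1" using R[of 0] mon dn inv_basic[OF inv] by simp
  hence c0: "?c 0 \<noteq> 0" by auto
  define a0 where "a0 = ext_seq chi v (- int m)"
  have ra0: "recurrent chi a0 (1 - int n) (int n - 1)"
    unfolding recurrent_def a0_def using ext_rec[OF mon c0] by blast
  have ag0: "a0 i = v i" if "- int m \<le> i" "i \<le> int m" for i
  proof -
    define t where "t = i + int m"
    have i: "i = - int m + t" "0 \<le> t" unfolding t_def using that by auto
    show ?thesis
    proof (cases "t < int n")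
      case True thus ?thesis unfolding a0_def i(1) using ext_agree[OF i(2), of chi v "- int m"] dn by simp
    next
      case False
      hence tn: "t = int n" "2 * m = n" using that m unfolding t_def by auto
      have "a0 i = - (\<Sum>i<n. ?c i * v (- int m + int i))"
        unfolding a0_def i(1) tn(1) by (rule ext_agree_top[OF mon dn])
      also have "\<dots> = v (- int m + int n)"
        using cons[OF tn(2)] mon dn by (simp add: sum_atMost_last add_eq_0_iff2 add.commute)
      finally show ?thesis using i tn by simp
    qed
  qed
  show ?thesis
    unfolding fragment_works_def Let_def dn
  proof (intro conjI allI impI)
    show "\<exists>a. recurrent chi a (1 - int n) (int n - 1) \<and> (\<forall>i. - int m \<le> i \<and> i \<le> int m \<longrightarrow> a i = v i)"
      using ra0 ag0 by blast
  next
    fix a assume A: "recurrent chi a (1 - int n) (int n - 1) \<and> (\<forall>i. - int m \<le> i \<and> i \<le> int m \<longrightarrow> a i = v i)"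
    hence ra: "recurrent chi a (1 - int n) (int n - 1)" and ag: "\<And>i. - int m \<le> i \<Longrightarrow> i \<le> int m \<Longrightarrow> a i = v i"
      by auto
    have fsym: "a (- t) = eps * f (a t)" if "\<bar>t\<bar> \<le> int m" for t
      using vsym[OF that] ag that by auto
    have sym: "a (- t) = eps * f (a t)" if "\<bar>t\<bar> \<le> int n - 1" for t
      by (rule sym_ext[OF inv mon dn n1 R eps ra _ _ fsym that]) (use m n1 in auto)
    show "herm_solution f eps n (frobenius_block chi) (toeplitz_mat n a)"
      unfolding herm_solution_def
      using toep_carrier nonsing[OF ra] ag suff_sym[of n a eps f, OF sym] suff_Phi[OF inv mon dn n1 ra R] by blast
  qed
qed



lemma R_imp_C1:
  assumes inv: "is_involution f" and mon: "lead_coeff chi = 1" and dn: "degree chi = n"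
    and R: "\<And>k. k \<le> n \<Longrightarrow> f (coeff chi (n - k)) = f (coeff chi 0) * coeff chi k"
  shows "coeff chi 0 \<noteq> 0 \<and> chi = dual_poly f chi"
proof -
  let ?c = "coeff chi"
  note ib = inv_basic[OF inv]
  have f0c0: "f (?c 0) * ?c 0 = 1" using R[of 0] mon dn ib by simp
  hence c0: "?c 0 \<noteq> 0" and fc0: "f (?c 0) \<noteq> 0" by auto
  have "chi = dual_poly f chi"
  proof (rule poly_eqI)
    fix k
    show "coeff chi k = coeff (dual_poly f chi) k"
    proof (cases "k \<le> n")
      case True
      have "coeff (dual_poly f chi) k = inverse (f (?c 0)) * f (?c (n - k))"
        unfolding dual_poly_def using True dn by (simp add: coeff_map_poly ib coeff_reflect_poly)
      also have "\<dots> = ?c k" using R[OF True] fc0 by simp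
      finally show ?thesis by simp
    next
      case False
      thus ?thesis unfolding dual_poly_def using dn
        by (simp add: coeff_map_poly ib coeff_reflect_poly coeff_eq_0)
    qed
  qed
  thus ?thesis using c0 by simp
qed

lemma C1_imp_R:
  assumes inv: "is_involution f" and mon: "lead_coeff chi = 1" and dn: "degree chi = n"
    and C1: "coeff chi 0 \<noteq> 0 \<and> chi = dual_poly f chi" and k: "k \<le> n"
  shows "f (coeff chi (n - k)) = f (coeff chi 0) * coeff chi k"
proof -
  let ?c = "coeff chi"
  note ib = inv_basic[OF inv]
  have fc0: "f (?c 0) \<noteq> 0" using C1 ib by (metis)
  have "?c k = coeff (dual_poly f chi) k" using C1 by simp
  also have "\<dots> = inverse (f (?c 0)) * f (?c (n - k))"
    unfolding dual_poly_def using k dn by (simp add: coeff_map_poly ib coeff_reflect_poly)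
  finally show ?thesis using fc0 by (simp add: field_simps)
qed

lemma nec_main:
  assumes inv: "is_involution f" and mon: "lead_coeff chi = 1" and dn: "degree chi = n" and n1: "n \<ge> 1"
    and eps: "eps = 1 \<or> eps = -1"
    and sol: "herm_solution f eps n (frobenius_block chi) X"
  shows "\<exists>a. recurrent chi a (1 - int n) (int n - 1) \<and> (\<forall>t. \<bar>t\<bar> \<le> int n - 1 \<longrightarrow> a (- t) = eps * f (a t))
     \<and> det (toeplitz_mat n a) \<noteq> 0 \<and> (\<forall>k\<le>n. f (coeff chi (n - k)) = f (coeff chi 0) * coeff chi k)"
proof -
  have X: "X \<in> carrier_mat n n" and dX: "det X \<noteq> 0" and E1: "X = eps \<cdot>\<^sub>m star_mat f X"
    and E2: "X = star_mat f (frobenius_block chi) * X * frobenius_block chi"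
    using sol unfolding herm_solution_def by auto
  obtain a where XT: "X = toeplitz_mat n a" and rec: "recurrent chi a (1 - int n) (int n - 1)"
    and corner: "a 0 = (\<Sum>k<n. f (coeff chi k) * (\<Sum>l<n. a (int l - int k) * coeff chi l))"
    using nec_toep[OF inv mon dn n1 X E2] by blast
  have sym: "a (- t) = eps * f (a t)" if t: "\<bar>t\<bar> \<le> int n - 1" for t
  proof -
    define i where "i = nat (max t 0)"
    define j where "j = nat (max (- t) 0)"
    have ij: "i < n" "j < n" "int j - int i = - t" "int i - int j = t" using t unfolding i_def j_def by auto
    have "X $$ (i,j) = (eps \<cdot>\<^sub>m star_mat f X) $$ (i,j)" using E1 by simp
    thus ?thesis using ij X unfolding XT by (simp add: toep_idx star_mat_def toeplitz_mat_def)
  qed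
  have dT: "det (toeplitz_mat n a) \<noteq> 0" using dX XT by simp
  show ?thesis using nec_R[OF inv mon dn n1 rec sym corner dT] rec sym dT by blast
qed



lemma lin_p:
  assumes "lead_coeff p = 1" "degree p = 1"
  shows "p = [:coeff p 0, 1:]"
proof (rule poly_eqI)
  fix k show "coeff p k = coeff [:coeff p 0, 1:] k"
    using assms by (cases k) (auto simp: coeff_eq_0 coeff_pCons split: nat.splits)
qed

lemma id_involution: "is_involution id" unfolding is_involution_def by simp

lemma reflect_smult_id:
  assumes mon: "lead_coeff chi = 1" and dn: "degree chi = n"
    and R: "\<And>k. k \<le> n \<Longrightarrow> coeff chi (n - k) = coeff chi 0 * coeff chi k"
  shows "reflect_poly chi = smult (coeff chi 0) chi"
proof (rule poly_eqI)
  fix k show "coeff (reflect_poly chi) k = coeff (smult (coeff chi 0) chi) k"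
    using R[of k] dn by (cases "k \<le> n") (auto simp: coeff_reflect_poly coeff_eq_0)
qed

lemma alpha_sq:
  fixes \<alpha> :: "'a::field"
  assumes mon: "lead_coeff chi = 1" and dn: "degree chi = n" and n1: "n \<ge> 1"
    and R: "\<And>k. k \<le> n \<Longrightarrow> coeff chi (n - k) = coeff chi 0 * coeff chi k"
    and chi: "chi = [:\<alpha>, 1:] ^ s"
  shows "\<alpha> * \<alpha> = 1"
proof -
  let ?c = "coeff chi"
  have c0c0: "?c 0 * ?c 0 = 1" using R[of 0] mon dn by simp
  have s0: "s \<noteq> 0" using chi dn n1 by (cases s) auto
  have "?c 0 = \<alpha> ^ s" using chi by (simp add: coeff_0_power)
  hence a0: "\<alpha> \<noteq> 0" using c0c0 s0 by (cases s) auto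
  have root: "poly chi (- \<alpha>) = 0" using chi s0 by simp
  define y where "y = - inverse \<alpha>"
  have y0: "y \<noteq> 0" using a0 unfolding y_def by simp
  have "poly (reflect_poly chi) y = y ^ degree chi * poly chi (inverse y)"
    by (rule poly_reflect_poly_nz[OF y0])
  also have "inverse y = - \<alpha>" unfolding y_def by (simp add: inverse_minus_eq)
  finally have "poly (reflect_poly chi) y = 0" using root by simp
  hence "?c 0 * poly chi y = 0" using reflect_smult_id[OF mon dn R] by simp
  hence "poly chi y = 0" using c0c0 by auto
  hence "poly [:\<alpha>, 1:] y = 0" using chi by simp
  hence "\<alpha> = inverse \<alpha>" unfolding y_def by simp
  thus ?thesis using a0 by (metis right_inverse)
qed

lemma C2_nec:
  fixes \<alpha> :: "'a::field"
  assumes mon: "lead_coeff chi = 1" and dn: "degree chi = n" and n1: "n \<ge> 1"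
    and char2: "(2::'a) \<noteq> 0"
    and chi: "chi = [:\<alpha>, 1:] ^ n"
    and eps: "eps = (-1) ^ n"
    and sol: "herm_solution id eps n (frobenius_block chi) X"
  shows False
proof -
  have epsc: "eps = 1 \<or> eps = -1" using eps by (cases "even n") auto
  obtain a where rec: "recurrent chi a (1 - int n) (int n - 1)"
    and sym: "\<And>t. \<bar>t\<bar> \<le> int n - 1 \<Longrightarrow> a (- t) = eps * a t"
    and dT: "det (toeplitz_mat n a) \<noteq> 0"
    and R: "\<And>k. k \<le> n \<Longrightarrow> coeff chi (n - k) = coeff chi 0 * coeff chi k"
    using nec_main[OF id_involution mon dn n1 epsc sol] by auto
  have aa: "\<alpha> * \<alpha> = 1" by (rule alpha_sq[OF mon dn n1 R chi])
  hence a0: "\<alpha> \<noteq> 0" by auto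
  obtain N where N: "n = Suc N" using n1 by (cases n) auto
  define q where "q = [:\<alpha>, 1:] ^ N"
  have chiq: "chi = [:\<alpha>, 1:] * q" unfolding chi q_def N by simp
  have dq: "degree q = N" unfolding q_def by (simp add: degree_power_eq)
  have "lead_coeff q = 1" unfolding q_def by (simp add: lead_coeff_power)
  hence lq: "coeff q N = 1" using dq by simp
  have refl1: "reflect_poly [:\<alpha>, 1:] = smult \<alpha> [:\<alpha>, 1:]"
  proof (rule poly_eqI)
    fix k show "coeff (reflect_poly [:\<alpha>, 1:]) k = coeff (smult \<alpha> [:\<alpha>, 1:]) k"
      using aa by (cases k) (auto simp: coeff_reflect_poly coeff_pCons split: nat.splits)
  qed
  have reflq: "reflect_poly q = smult (\<alpha> ^ N) q"
    unfolding q_def reflect_poly_power refl1 by (simp only: smult_power)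
  have qsym: "coeff q k = \<alpha> ^ N * coeff q (N - k)" if k: "k \<le> N" for k
  proof -
    have "coeff q (N - k) = \<alpha> ^ N * coeff q k"
      using arg_cong[OF reflq, of "\<lambda>p. coeff p k"] k dq by (simp add: coeff_reflect_poly)
    moreover have "\<alpha> ^ N * \<alpha> ^ N = 1" using aa by (metis power_mult_distrib power_one)
    ultimately show ?thesis by (metis mult.assoc mult_1)
  qed
  define W where "W l = (\<Sum>k<n. coeff q k * a (l + int k))" for l
  have Wstep: "W (l + 1) = - \<alpha> * W l" if l: "1 - int n \<le> l" "l \<le> -1" for l
  proof -
    have z: "(\<Sum>k\<le>n. coeff chi k * a (l + int k)) = 0" using rec l dn unfolding recurrent_def by auto
    have cc: "coeff chi k = \<alpha> * coeff q k + coeff (pCons 0 q) k" for k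
      unfolding chiq by (simp add: mult_pCons_left)
    have "(\<Sum>k\<le>n. coeff chi k * a (l + int k)) = \<alpha> * (\<Sum>k\<le>n. coeff q k * a (l + int k)) + (\<Sum>k\<le>n. coeff (pCons 0 q) k * a (l + int k))"
      by (simp only: cc distrib_right sum.distrib sum_distrib_left mult.assoc)
    also have "(\<Sum>k\<le>n. coeff q k * a (l + int k)) = W l"
      unfolding W_def using dq N by (simp add: sum_atMost_last coeff_eq_0)
    also have "(\<Sum>k\<le>n. coeff (pCons 0 q) k * a (l + int k)) = W (l + 1)"
      unfolding W_def N by (subst sum.atMost_shift) (simp add: algebra_simps)
    finally show ?thesis using z by (simp add: eq_neg_iff_add_eq_0 add.commute)
  qed
  have Wit: "W (1 - int n + int j) = (- \<alpha>) ^ j * W (1 - int n)" if "j \<le> N" for j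
    using that
  proof (induction j)
    case 0 thus ?case by simp
  next
    case (Suc j)
    have "W (1 - int n + int (Suc j)) = W ((1 - int n + int j) + 1)" by (simp add: algebra_simps)
    also have "\<dots> = - \<alpha> * W (1 - int n + int j)" by (rule Wstep) (use Suc.prems N in auto)
    finally show ?case using Suc by simp
  qed
  have W0: "W 0 = eps * \<alpha> ^ N * W (1 - int n)"
  proof -
    have "W 0 = (\<Sum>k<n. coeff q k * (eps * a (- int k)))"
      unfolding W_def
    proof (intro sum.cong refl)
      fix k assume "k \<in> {..<n}"
      hence "a (- (- int k)) = eps * a (- int k)" by (intro sym) auto
      thus "coeff q k * a (0 + int k) = coeff q k * (eps * a (- int k))" by simp
    qed
    also have "\<dots> = eps * \<alpha> ^ N * (\<Sum>k<n. coeff q (N - k) * a (- int k))"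
      unfolding sum_distrib_left
    proof (intro sum.cong refl)
      fix k assume "k \<in> {..<n}"
      hence "coeff q k = \<alpha> ^ N * coeff q (N - k)" using qsym[of k] N by simp
      thus "coeff q k * (eps * a (- int k)) = eps * \<alpha> ^ N * (coeff q (N - k) * a (- int k))" by simp
    qed
    also have "(\<Sum>k<n. coeff q (N - k) * a (- int k)) = (\<Sum>k<n. coeff q (N - (n - Suc k)) * a (- int (n - Suc k)))"
      by (rule sum.nat_diff_reindex[symmetric])
    also have "\<dots> = W (1 - int n)" unfolding W_def N by (intro sum.cong refl) (auto simp: of_nat_diff)
    finally show ?thesis .
  qed
  have "W 0 = (- \<alpha>) ^ N * W (1 - int n)" using Wit[of N] N by simp
  hence "(- 1) ^ N * \<alpha> ^ N * W (1 - int n) = eps * \<alpha> ^ N * W (1 - int n)" using W0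
    by (simp add: power_minus[of \<alpha>]) metis
  hence "((- 1) ^ N - eps) * \<alpha> ^ N * W (1 - int n) = 0"
    by (simp only: left_diff_distrib right_minus_eq)
  moreover have "(- 1) ^ N - eps = 2 * (- 1) ^ N" using eps N by simp
  ultimately have W1: "W (1 - int n) = 0" using char2 a0 by simp
  have Wz: "W (- int i) = 0" if "i < n" for i
  proof -
    have "1 - int n + int (N - i) = - int i" using that N by auto
    thus ?thesis using Wit[of "N - i"] W1 by simp
  qed
  have Xv: "toeplitz_mat n a *\<^sub>v vec n (coeff q) = 0\<^sub>v n"
  proof (rule eq_vecI)
    fix i assume "i < dim_vec (0\<^sub>v n :: 'a vec)"
    hence i: "i < n" by simp
    have "(toeplitz_mat n a *\<^sub>v vec n (coeff q)) $ i = W (- int i)"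
      using i unfolding W_def by (simp add: toeplitz_mat_def scalar_prod_def atLeast0LessThan mult.commute)
    thus "(toeplitz_mat n a *\<^sub>v vec n (coeff q)) $ i = 0\<^sub>v n $ i" using Wz[OF i] i by simp
  qed (simp add: toeplitz_mat_def)
  have "vec n (coeff q) \<noteq> 0\<^sub>v n"
  proof
    assume "vec n (coeff q) = 0\<^sub>v n"
    hence "vec n (coeff q) $ N = 0\<^sub>v n $ N" by simp
    thus False using lq N by simp
  qed
  moreover have "vec n (coeff q) \<in> carrier_vec n" by simp
  ultimately show False using dT Xv det_0_iff_vec_prod_zero[OF toep_carrier[of n a]] by blast
qed



lemma sum_support:
  fixes g :: "nat \<Rightarrow> 'a::comm_monoid_add"
  assumes "S \<subseteq> {..r}" and "\<And>k. k \<le> r \<Longrightarrow> k \<notin> S \<Longrightarrow> g k = 0"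
  shows "(\<Sum>k\<le>r. g k) = (\<Sum>k\<in>S. g k)"
  by (rule sum.mono_neutral_right) (use assms in \<open>auto intro: finite_subset\<close>)

lemma root_deg1:
  fixes p :: "'a::field poly"
  assumes pi: "irreducible p" and r: "poly p x = 0"
  shows "degree p = 1"
proof -
  have "[:- x, 1:] dvd p" using r by (simp add: poly_eq_0_iff_dvd)
  then obtain g where g: "p = [:- x, 1:] * g" by auto
  have "\<not> is_unit [:- x, 1:]" by (simp add: is_unit_pCons_iff)
  hence "is_unit g" using pi g unfolding irreducible_def by blast
  moreover have "g \<noteq> 0" using \<open>is_unit g\<close> by auto
  ultimately have "degree g = 0" using is_unit_iff_degree[of g] by simp
  moreover have "g \<noteq> 0" using \<open>is_unit g\<close> by auto
  ultimately have "degree ([:- x, 1:] * g) = 1"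
    using degree_mult_eq[of "[:- x, 1:]" g] by simp
  thus ?thesis using g by simp
qed

lemma irr_deg_pos:
  fixes p :: "'a::field poly"
  assumes pi: "irreducible p" shows "degree p \<ge> 1"
proof (rule ccontr)
  assume "\<not> degree p \<ge> 1"
  hence "degree p = 0" by simp
  moreover have "p \<noteq> 0" "\<not> is_unit p" using pi by (auto simp: irreducible_def)
  ultimately show False by (simp add: is_unit_iff_degree)
qed

lemma quad_p:
  assumes "lead_coeff p = 1" "degree p = 2"
  shows "p = [:coeff p 0, coeff p 1, 1:]"
proof (rule poly_eqI)
  fix k show "coeff p k = coeff [:coeff p 0, coeff p 1, 1:] k"
    using assms by (cases k; cases "k - 1") (auto simp: coeff_eq_0 coeff_pCons numeral_2_eq_2 split: nat.splits)
qed

lemma b_contra: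
  fixes p :: "'a::field poly"
  assumes mon: "lead_coeff chi = 1" and dn: "degree chi = n" and char2: "(2::'a) \<noteq> 0"
    and R: "\<And>k. k \<le> n \<Longrightarrow> coeff chi (n - k) = coeff chi 0 * coeff chi k"
    and pm: "lead_coeff p = 1" and pi: "irreducible p" and d2: "degree p = 2"
    and chi: "chi = p ^ s" and s1: "s \<ge> 1" and q0: "coeff p 0 ^ (s - 1) = -1"
  shows False
proof -
  let ?p0 = "coeff p 0" and ?p1 = "coeff p 1"
  have c0c0: "coeff chi 0 * coeff chi 0 = 1" using R[of 0] mon dn by simp
  have c0: "coeff chi 0 = ?p0 ^ s" using chi by (simp add: coeff_0_power)
  obtain s' where s': "s = Suc s'" using s1 by (cases s) auto
  have "?p0 ^ s' = -1" using q0 s' by simp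
  moreover have "?p0 ^ s * ?p0 ^ s = 1" using c0c0 c0 by simp
  ultimately have "?p0 * ?p0 = 1" using s' by (simp add: algebra_simps)
  hence "(?p0 - 1) * (?p0 + 1) = 0" by (simp add: algebra_simps)
  hence "?p0 = 1 \<or> ?p0 = -1" by (auto simp: eq_neg_iff_add_eq_0)
  moreover have "?p0 \<noteq> 1" using \<open>?p0 ^ s' = -1\<close> char2 by (auto simp: eq_neg_iff_add_eq_0)
  ultimately have p0: "?p0 = -1" by blast
  have pq: "p = [:-1, ?p1, 1:]" using quad_p[OF pm d2] p0 by simp
  have "reflect_poly chi = smult (coeff chi 0) chi" by (rule reflect_smult_id[OF mon dn R])
  hence "reflect_poly p ^ s = smult (coeff chi 0) (p ^ s)" using chi by (simp add: reflect_poly_power)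
  moreover have "p dvd smult (coeff chi 0) (p ^ s)" using s' by (intro dvd_smult) simp
  ultimately have "p dvd reflect_poly p ^ s" by simp
  hence "p dvd reflect_poly p" using field_poly_irreducible_imp_prime[OF pi] prime_elem_dvd_power by blast
  hence dv: "p dvd reflect_poly p + p" by simp
  have g: "reflect_poly p + p = monom (2 * ?p1) 1"
  proof (rule poly_eqI)
    fix k show "coeff (reflect_poly p + p) k = coeff (monom (2 * ?p1) 1) k"
      by (subst (1 2) pq) (cases k; cases "k - 1"; auto simp: coeff_reflect_poly coeff_monom coeff_eq_0 split: nat.splits)
  qed
  have "monom (2 * ?p1) 1 = 0"
  proof (rule ccontr)
    assume ne: "monom (2 * ?p1) 1 \<noteq> 0"
    have "degree p \<le> degree (monom (2 * ?p1) 1)" using dv g ne by (metis dvd_imp_degree_le)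
    moreover have "degree (monom (2 * ?p1) 1) \<le> 1" by (simp add: degree_monom_le)
    ultimately show False using d2 by simp
  qed
  hence "?p1 = 0" using char2 by simp
  hence "poly p 1 = 0" by (subst pq) simp
  hence "degree p = 1" by (rule root_deg1[OF pi])
  thus False using d2 by simp
qed

lemma even_impossible:
  fixes p :: "'a::field poly"
  assumes mon: "lead_coeff chi = 1" and dn: "degree chi = n" and char2: "(2::'a) \<noteq> 0"
    and R: "\<And>k. k \<le> n \<Longrightarrow> coeff chi (n - k) = coeff chi 0 * coeff chi k"
    and pm: "lead_coeff p = 1" and pi: "irreducible p"
    and chi: "chi = p ^ s" and ev: "even n" and c0: "coeff chi 0 = -1"
  shows False
proof -
  have "reflect_poly chi = smult (coeff chi 0) chi" by (rule reflect_smult_id[OF mon dn R])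
  hence "poly (reflect_poly chi) 1 = - poly chi 1" using c0 by simp
  moreover have "poly (reflect_poly chi) 1 = poly chi 1" using poly_reflect_poly_nz[of 1 chi] by simp
  ultimately have "poly chi 1 = 0" using char2 by (simp add: eq_neg_iff_add_eq_0 flip: mult_2)
  hence "poly p 1 = 0" using chi by simp
  hence d1: "degree p = 1" by (rule root_deg1[OF pi])
  hence "p = [:coeff p 0, 1:]" using lin_p[OF pm] by simp
  hence "coeff p 0 = -1" using \<open>poly p 1 = 0\<close> by (metis add.commute add_eq_0_iff2 mult_1 poly_pCons poly_0 add_0_right)
  moreover have "s = n" using dn chi d1 pi by (simp add: degree_power_eq irreducible_def)
  ultimately have "coeff chi 0 = 1" using chi ev by (simp add: coeff_0_power)
  thus False using c0 char2 by (simp add: eq_neg_iff_add_eq_0)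
qed



locale setting =
  fixes f :: "'a::field \<Rightarrow> 'a" and eps :: 'a and chi p :: "'a poly" and s n :: nat
  assumes inv: "is_involution f" and char2: "(2::'a) \<noteq> 0"
    and eps: "eps = 1 \<or> eps = -1" and eps_nonid: "f \<noteq> id \<longrightarrow> eps = 1"
    and n1: "n \<ge> 1" and dn: "degree chi = n"
    and pm: "lead_coeff p = 1" and pi: "irreducible p" and chi: "chi = p ^ s"
    and R: "\<And>k. k \<le> n \<Longrightarrow> f (coeff chi (n - k)) = f (coeff chi 0) * coeff chi k"
    and C2: "f = id \<and> eps = (-1) ^ n \<longrightarrow> degree p > 1"
begin

abbreviation "q \<equiv> p ^ (s - 1)"
abbreviation "c \<equiv> coeff chi"

lemma ib: "f 0 = 0" "f 1 = 1" "f (-x) = - f x" "f (x - y) = f x - f y" "f (x + y) = f x + f y"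
    "f (x * y) = f x * f y" "f (f x) = x"
  using inv_basic[OF inv] by auto

lemma mon: "lead_coeff chi = 1" using chi pm by (simp add: lead_coeff_power)

lemma f0c0: "f (c 0) * c 0 = 1" using R[of 0] mon dn ib by simp
lemma c0: "c 0 \<noteq> 0" using f0c0 by auto
lemma epsf: "f eps = eps" "eps * eps = 1" using eps_props[OF inv eps] .

lemma p0: "p \<noteq> 0" using pi by (auto simp: irreducible_def)
lemma dpos: "degree p \<ge> 1" using irr_deg_pos[OF pi] .
lemma n_eq: "n = s * degree p" using dn chi p0 by (simp add: degree_power_eq)
lemma s1: "s \<ge> 1" using n_eq n1 by (cases s) auto
lemma dq: "degree q + degree p = n"
proof -
  obtain s' where s': "s = Suc s'" using s1 by (cases s) auto
  show ?thesis using n_eq p0 unfolding s' by (simp add: degree_power_eq)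
qed
lemma dq_le: "degree q \<le> n - 1" using dq dpos by auto
lemma lq: "coeff q (degree q) = 1" using pm by (simp add: lead_coeff_power)
lemma q0: "coeff q 0 \<noteq> 0"
proof -
  have "c 0 = coeff p 0 ^ s" using chi by (simp add: coeff_0_power)
  hence "coeff p 0 \<noteq> 0" using c0 s1 by (cases s) auto
  thus ?thesis by (simp add: coeff_0_power)
qed

lemma window:
  assumes rec: "recurrent chi a (1 - int n) (int n - 1)" and dt: "det (toeplitz_mat n a) = 0"
    and l: "1 - int n \<le> l" "l + int (degree q) \<le> int n - 1"
  shows "(\<Sum>k\<le>degree q. coeff q k * a (l + int k)) = 0"
  by (rule sing_window[OF rec dn mon n1 pm pi chi dt l])

lemma gen:
  assumes m: "n \<le> 2 * m + 1" "2 * m \<le> n"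
    and vsym: "\<And>t. \<bar>t\<bar> \<le> int m \<Longrightarrow> v (- t) = eps * f (v t)"
    and cons: "2 * m = n \<Longrightarrow> (\<Sum>i\<le>n. c i * v (- int m + int i)) = 0"
    and nonsing: "\<And>a. recurrent chi a (1 - int n) (int n - 1) \<Longrightarrow>
        (\<forall>i. - int m \<le> i \<and> i \<le> int m \<longrightarrow> a i = v i) \<Longrightarrow> det (toeplitz_mat n a) \<noteq> 0"
  shows "fragment_works f eps chi (frobenius_block chi) m v"
  by (rule frag_works_gen[OF inv mon dn n1 R eps m vsym cons nonsing])

end



context setting begin

lemma case_a:
  assumes nm: "n = 2 * m" and ne: "c 0 \<noteq> eps"
  shows "fragment_works f eps chi (frobenius_block chi) m
           (\<lambda>i. if i = - int m then eps * f (c 0) - 1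
                else if i = int m then c 0 - eps else 0)"
  (is "fragment_works _ _ _ _ _ ?v")
proof (rule gen)
  have m1: "m \<ge> 1" using nm n1 by auto
  show "n \<le> 2 * m + 1" "2 * m \<le> n" using nm by auto
  show "?v (- t) = eps * f (?v t)" if t: "\<bar>t\<bar> \<le> int m" for t
  proof -
    consider "t = int m" | "t = - int m" | "t \<noteq> int m" "t \<noteq> - int m" by blast
    thus ?thesis
    proof cases
      case 1 thus ?thesis using m1 epsf by (simp add: ib algebra_simps)
    next
      case 2 thus ?thesis using m1 epsf by (simp add: ib algebra_simps)
    next
      case 3 thus ?thesis by (auto simp: ib)
    qed
  qed
  show "(\<Sum>i\<le>n. c i * ?v (- int m + int i)) = 0"
  proof -
    have "(\<Sum>i\<le>n. c i * ?v (- int m + int i)) = (\<Sum>i\<in>{0, n}. c i * ?v (- int m + int i))"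
      by (rule sum_support) (use nm in auto)
    also have "\<dots> = c 0 * (eps * f (c 0) - 1) + c 0 - eps"
      using nm m1 mon dn by simp
    also have "\<dots> = eps * (f (c 0) * c 0) - eps" by (simp add: algebra_simps)
    also have "\<dots> = 0" using f0c0 by simp
    finally show ?thesis .
  qed
  fix a assume rec: "recurrent chi a (1 - int n) (int n - 1)"
    and ag: "\<forall>i. - int m \<le> i \<and> i \<le> int m \<longrightarrow> a i = ?v i"
  show "det (toeplitz_mat n a) \<noteq> 0"
  proof
    assume dt: "det (toeplitz_mat n a) = 0"
    have "(\<Sum>k\<le>degree q. coeff q k * a (- int m + int k)) = 0"
      by (rule window[OF rec dt]) (use m1 nm dq_le in auto)
    moreover have "(\<Sum>k\<le>degree q. coeff q k * a (- int m + int k)) = (\<Sum>k\<in>{0}. coeff q k * a (- int m + int k))"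
    proof (rule sum_support)
      fix k assume k: "k \<le> degree q" "k \<notin> {0}"
      have "a (- int m + int k) = ?v (- int m + int k)" using ag k dq_le nm by auto
      also have "\<dots> = 0" using k dq_le nm by auto
      finally show "coeff q k * a (- int m + int k) = 0" by simp
    qed simp
    moreover have "a (- int m) = eps * f (c 0) - 1" using ag m1 by auto
    ultimately have "coeff q 0 * (eps * f (c 0) - 1) = 0" by simp
    hence "eps * f (c 0) = 1" using q0 by simp
    hence "eps * (eps * f (c 0)) = eps" by simp
    hence "f (c 0) = eps" using epsf by (simp add: mult.assoc[symmetric])
    hence "c 0 = eps" using epsf ib by metis
    thus False using ne by simp
  qed
qed

end


context setting begin

lemma R_id: "f = id \<Longrightarrow> k \<le> n \<Longrightarrow> c (n - k) = c 0 * c k"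
  using R[of k] by simp

lemma case_b:
  assumes nm: "n = 2 * m" and e1: "eps = 1" and fid: "f = id"
  shows "fragment_works f eps chi (frobenius_block chi) m
           (\<lambda>i. if n = 2 then
                  (if i = -1 \<or> i = 1 then c (n - 1) else if i = 0 then -2 else 0)
                else
                  (if i = - int m \<or> i = int m then c (n - 1)
                   else if i = - int m + 1 \<or> i = int m - 1 then -1 else 0))"
  (is "fragment_works _ _ _ _ _ ?v")
proof (rule gen)
  have m1: "m \<ge> 1" using nm n1 by auto
  have d2: "degree p \<ge> 2" using C2 fid e1 nm by auto
  have c00: "c 0 * c 0 = 1" using f0c0 fid by simp
  show "n \<le> 2 * m + 1" "2 * m \<le> n" using nm by auto
  show "?v (- t) = eps * f (?v t)" if t: "\<bar>t\<bar> \<le> int m" for t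
    using e1 fid by auto
  show "(\<Sum>i\<le>n. c i * ?v (- int m + int i)) = 0"
  proof (cases "n = 2")
    case True
    hence m: "m = 1" using nm by auto
    have "(\<Sum>i\<le>n. c i * ?v (- int m + int i)) = c 0 * c 1 + c 1 * (-2) + c 2 * c 1"
      using True m by (simp add: numeral_2_eq_2)
    also have "c 2 = 1" using mon dn True by simp
    finally have e: "(\<Sum>i\<le>n. c i * ?v (- int m + int i)) = c 0 * c 1 - c 1" by (simp add: algebra_simps)
    have h: "c 1 = c 0 * c 1" using R_id[OF fid, of 1] True by simp
    have "c 0 * c 1 - c 1 = 0" by (metis h diff_self)
    thus ?thesis using e by simp
  next
    case False
    hence m2: "m \<ge> 2" using nm m1 by auto
    have "(\<Sum>i\<le>n. c i * ?v (- int m + int i)) = (\<Sum>i\<in>{0, 1, n - 1, n}. c i * ?v (- int m + int i))"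
      by (rule sum_support) (use nm m2 False in auto)
    also have "\<dots> = c 0 * c (n - 1) - c 1 - c (n - 1) + c n * c (n - 1)"
      using nm m2 False by (simp add: algebra_simps)
    also have "c n = 1" using mon dn by simp
    finally have e: "(\<Sum>i\<le>n. c i * ?v (- int m + int i)) = c 0 * c (n - 1) - c 1" by simp
    have "c (n - 1) = c 0 * c 1" using R_id[OF fid, of 1] m2 nm by simp
    hence "c 0 * c (n - 1) = (c 0 * c 0) * c 1" by (simp add: algebra_simps)
    thus ?thesis using e c00 by simp
  qed
  fix a assume rec: "recurrent chi a (1 - int n) (int n - 1)"
    and ag: "\<forall>i. - int m \<le> i \<and> i \<le> int m \<longrightarrow> a i = ?v i"
  show "det (toeplitz_mat n a) \<noteq> 0"
  proof
    assume dt: "det (toeplitz_mat n a) = 0"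
    show False
    proof (cases "n = 2")
      case True
      hence m: "m = 1" using nm by auto
      have "degree q = 0" using dq d2 True by auto
      have "(\<Sum>k\<le>degree q. coeff q k * a (0 + int k)) = 0"
        by (rule window[OF rec dt]) (use \<open>degree q = 0\<close> True in auto)
      moreover have "a 0 = -2" using ag m True by auto
      ultimately have "coeff q 0 * 2 = 0" using \<open>degree q = 0\<close> by simp
      thus False using q0 char2 by simp
    next
      case False
      hence m2: "m \<ge> 2" using nm m1 by auto
      let ?r = "degree q"
      have r: "?r \<le> 2 * m - 2" using dq d2 nm by auto
      have "(\<Sum>k\<le>?r. coeff q k * a ((- int m + 1) + int k)) = 0"
        by (rule window[OF rec dt]) (use r m2 nm in auto)
      moreover have "(\<Sum>k\<le>?r. coeff q k * a ((- int m + 1) + int k)) =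
          (\<Sum>k\<in>{0} \<union> ({2 * m - 2} \<inter> {..?r}). coeff q k * a ((- int m + 1) + int k))"
      proof (rule sum_support)
        fix k assume k: "k \<le> ?r" "k \<notin> {0} \<union> ({2 * m - 2} \<inter> {..?r})"
        have "a ((- int m + 1) + int k) = ?v ((- int m + 1) + int k)" using ag k r m2 by auto
        also have "\<dots> = 0" using k r m2 False by auto
        finally show "coeff q k * a ((- int m + 1) + int k) = 0" by simp
      qed auto
      moreover have "a (- int m + 1) = -1" using ag m2 False by auto
      moreover have "?r = 2 * m - 2 \<Longrightarrow> a (int m - 1) = -1" using ag m2 False by auto
      ultimately have S: "coeff q 0 * (-1) + (if ?r = 2 * m - 2 then coeff q ?r * (-1) else 0) = 0"
        using m2 r by (cases "?r = 2 * m - 2") (auto simp: algebra_simps)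
      show False
      proof (cases "?r = 2 * m - 2")
        case False thus False using S q0 by simp
      next
        case True
        hence "coeff q 0 = -1" using S lq by (simp add: minus_equation_iff)
        hence "coeff p 0 ^ (s - 1) = -1" by (simp add: coeff_0_power)
        moreover have "degree p = 2" using dq True nm m2 by auto
        moreover have "R2": "\<And>k. k \<le> n \<Longrightarrow> c (n - k) = c 0 * c k" using R_id[OF fid] by blast
        ultimately show False using b_contra[OF mon dn char2 R2 pm pi _ chi s1] by blast
      qed
    qed
  qed
qed

end


context setting begin

lemma s_eq_n: "degree p = 1 \<Longrightarrow> s = n" using n_eq by simp

lemma case_c:
  assumes kk: "k = - f k" "k \<noteq> 0"
    and cs: "(n = 2 * m \<and> c 0 = 1 \<and> f \<noteq> id) \<or>
             (n = 2 * m + 1 \<and> (\<exists>\<alpha>. p = [:\<alpha>, 1:] \<and> \<alpha> ^ (n - 1) = -1))"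
  shows "fragment_works f eps chi (frobenius_block chi) m
           (\<lambda>i. if i = - int m then - k else if i = int m then k else 0)"
  (is "fragment_works _ _ _ _ _ ?v")
proof -
  have fnid: "f \<noteq> id"
  proof
    assume "f = id"
    from kk(1) have "k = - k" unfolding \<open>f = id\<close> id_apply .
    hence "k + k = k + (- k)" by (rule arg_cong[where f="\<lambda>x. k + x"])
    hence "k + k = 0" by (simp only: add.right_inverse)
    hence "2 * k = 0" by (metis mult_2)
    thus False using kk(2) char2 by simp
  qed
  hence e1: "eps = 1" using eps_nonid by simp
  have fk: "f k = - k"
  proof -
    have "- k = - (- f k)" by (rule arg_cong[OF kk(1)])
    thus ?thesis by simp
  qed
  have m1: "m \<ge> 1"
  proof (rule ccontr)
    assume "\<not> m \<ge> 1"
    hence "m = 0" by simp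
    from cs show False
    proof
      assume "n = 2 * m \<and> c 0 = 1 \<and> f \<noteq> id" thus False using \<open>m = 0\<close> n1 by simp
    next
      assume h: "n = 2 * m + 1 \<and> (\<exists>\<alpha>. p = [:\<alpha>, 1:] \<and> \<alpha> ^ (n - 1) = -1)"
      then obtain \<alpha> :: 'a where "\<alpha> ^ (n - 1) = -1" by blast
      moreover have "n - 1 = 0" using h \<open>m = 0\<close> by simp
      ultimately have "(1::'a) = -1" by simp
      thus False using char2 by (simp add: eq_neg_iff_add_eq_0)
    qed
  qed
  show ?thesis
  proof (rule gen)
    show "n \<le> 2 * m + 1" "2 * m \<le> n" using cs by auto
    show "?v (- t) = eps * f (?v t)" if t: "\<bar>t\<bar> \<le> int m" for t
      using m1 e1 fk ib by auto
    show "(\<Sum>i\<le>n. c i * ?v (- int m + int i)) = 0" if nm: "2 * m = n"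
    proof -
      have cc: "c 0 = 1" using cs nm by auto
      have "(\<Sum>i\<le>n. c i * ?v (- int m + int i)) = (\<Sum>i\<in>{0, n}. c i * ?v (- int m + int i))"
        by (rule sum_support) (use nm in auto)
      also have "\<dots> = 0" using nm m1 mon dn cc by simp
      finally show ?thesis .
    qed
    fix a assume rec: "recurrent chi a (1 - int n) (int n - 1)"
      and ag: "\<forall>i. - int m \<le> i \<and> i \<le> int m \<longrightarrow> a i = ?v i"
    show "det (toeplitz_mat n a) \<noteq> 0"
    proof
      assume dt: "det (toeplitz_mat n a) = 0"
      let ?r = "degree q"
      have r: "?r \<le> 2 * m" using dq_le cs by auto
      have "(\<Sum>k\<le>?r. coeff q k * a (- int m + int k)) = 0"
        by (rule window[OF rec dt]) (use r m1 cs dq_le in auto)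
      moreover have "(\<Sum>k\<le>?r. coeff q k * a (- int m + int k)) =
          (\<Sum>k\<in>{0} \<union> ({2 * m} \<inter> {..?r}). coeff q k * a (- int m + int k))"
      proof (rule sum_support)
        fix j assume j: "j \<le> ?r" "j \<notin> {0} \<union> ({2 * m} \<inter> {..?r})"
        have "a (- int m + int j) = ?v (- int m + int j)" using ag j r by auto
        also have "\<dots> = 0" using j r by auto
        finally show "coeff q j * a (- int m + int j) = 0" by simp
      qed auto
      moreover have "a (- int m) = - k" using ag m1 by auto
      moreover have "?r = 2 * m \<Longrightarrow> a (int m) = k" using ag m1 by auto
      ultimately have S: "coeff q 0 * (- k) + (if ?r = 2 * m then coeff q ?r * k else 0) = 0"
        using m1 r by (cases "?r = 2 * m") (auto simp: algebra_simps)
      show False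
      proof (cases "?r = 2 * m")
        case False thus False using S q0 kk(2) by simp
      next
        case True
        hence odd: "n = 2 * m + 1" using dq dpos cs by auto
        then obtain \<alpha> where al: "p = [:\<alpha>, 1:]" "\<alpha> ^ (n - 1) = -1" using cs m1 by auto
        have "degree p = 1" using al by simp
        hence "s = n" by (rule s_eq_n)
        hence "coeff q 0 = -1" using al by (simp add: coeff_0_power)
        hence "k + k = 0" using S True lq by simp
        hence "2 * k = 0" by (metis mult_2)
        thus False using kk(2) char2 by simp
      qed
    qed
  qed
qed

lemma case_d:
  assumes nm: "n = 2 * m + 1" and nex: "\<not> (\<exists>\<alpha>. p = [:\<alpha>, 1:] \<and> \<alpha> ^ (n - 1) = -1)"
  shows "fragment_works f eps chi (frobenius_block chi) m
           (\<lambda>i. if i = - int m then eps else if i = int m then 1 else 0)"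
  (is "fragment_works _ _ _ _ _ ?v")
proof -
  have em: "degree p > 1" if "eps = -1"
  proof -
    have "f = id" using that eps_nonid char2 by (auto simp: eq_neg_iff_add_eq_0)
    moreover have "eps = (-1) ^ n" using that nm by simp
    ultimately show ?thesis using C2 by blast
  qed
  show ?thesis
  proof (rule gen)
    show "n \<le> 2 * m + 1" "2 * m \<le> n" using nm by auto
    show "?v (- t) = eps * f (?v t)" if t: "\<bar>t\<bar> \<le> int m" for t
    proof (cases "m = 0")
      case True
      hence t0: "t = 0" using t by auto
      have "eps = 1"
      proof (rule ccontr)
        assume "eps \<noteq> 1"
        hence "degree p > 1" using em eps by auto
        thus False using dq nm True by auto
      qed
      thus ?thesis using t0 True ib by simp
    next
      case False
      thus ?thesis using epsf ib by auto
    qed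
    show "(\<Sum>i\<le>n. c i * ?v (- int m + int i)) = 0" if "2 * m = n" using that nm by auto
    fix a assume rec: "recurrent chi a (1 - int n) (int n - 1)"
      and ag: "\<forall>i. - int m \<le> i \<and> i \<le> int m \<longrightarrow> a i = ?v i"
    show "det (toeplitz_mat n a) \<noteq> 0"
    proof
      assume dt: "det (toeplitz_mat n a) = 0"
      let ?r = "degree q"
      have r: "?r \<le> 2 * m" using dq_le nm by auto
      have "(\<Sum>k\<le>?r. coeff q k * a (- int m + int k)) = 0"
        by (rule window[OF rec dt]) (use r nm dq_le in auto)
      moreover have "(\<Sum>k\<le>?r. coeff q k * a (- int m + int k)) =
          (\<Sum>k\<in>{0} \<union> ({2 * m} \<inter> {..?r} - {0}). coeff q k * a (- int m + int k))"
      proof (rule sum_support)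
        fix j assume j: "j \<le> ?r" "j \<notin> {0} \<union> ({2 * m} \<inter> {..?r} - {0})"
        have "a (- int m + int j) = ?v (- int m + int j)" using ag j r by auto
        also have "\<dots> = 0" using j r by auto
        finally show "coeff q j * a (- int m + int j) = 0" by simp
      qed auto
      moreover have "a (- int m) = eps" using ag by auto
      moreover have "?r = 2 * m \<Longrightarrow> m \<noteq> 0 \<Longrightarrow> a (int m) = 1" using ag by auto
      ultimately have S: "coeff q 0 * eps + (if ?r = 2 * m \<and> m \<noteq> 0 then coeff q ?r else 0) = 0"
        using r by (cases "?r = 2 * m \<and> m \<noteq> 0") (auto simp: algebra_simps)
      show False
      proof (cases "?r = 2 * m \<and> m \<noteq> 0")
        case False thus False using S q0 eps by auto
      next
        case True
        have d1: "degree p = 1" using dq True nm by auto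
        hence sn: "s = n" by (rule s_eq_n)
        have pl: "p = [:coeff p 0, 1:]" using lin_p[OF pm d1] .
        have "coeff q 0 = coeff p 0 ^ (n - 1)" using sn by (simp add: coeff_0_power)
        hence e: "coeff p 0 ^ (n - 1) * eps = -1" using S True lq by (simp add: eq_neg_iff_add_eq_0)
        show False
        proof (cases "eps = 1")
          case True thus False using e nex pl by auto
        next
          case False thus False using em eps d1 by auto
        qed
      qed
    qed
  qed
qed

end


lemma frag_sol:
  assumes "fragment_works f eps chi Phi m v" and "degree chi = n"
  shows "\<exists>X. herm_solution f eps n Phi X"
  using assms unfolding fragment_works_def Let_def by blast

context setting begin

lemma exists_k: "f \<noteq> id \<Longrightarrow> \<exists>k. k = - f k \<and> k \<noteq> 0"
proof -
  assume "f \<noteq> id"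
  then obtain b where b: "f b \<noteq> b" by (metis eq_id_iff)
  define k where "k = b - f b"
  have "k = - f k" unfolding k_def by (simp add: ib)
  moreover have "k \<noteq> 0" using b unfolding k_def by simp
  ultimately show ?thesis by blast
qed

lemma exists_sol: "\<exists>X. herm_solution f eps n (frobenius_block chi) X"
proof (cases "even n")
  case True
  then obtain m where nm: "n = 2 * m" by (metis evenE)
  show ?thesis
  proof (cases "c 0 = eps")
    case False thus ?thesis using frag_sol[OF case_a[OF nm False] dn] by blast
  next
    case ce: True
    show ?thesis
    proof (cases "f = id")
      case fid: True
      show ?thesis
      proof (cases "eps = 1")
        case True thus ?thesis using frag_sol[OF case_b[OF nm True fid] dn] by blast
      next
        case False
        hence "c 0 = -1" using ce eps by simp
        moreover have "\<And>k. k \<le> n \<Longrightarrow> c (n - k) = c 0 * c k" using R_id[OF fid] by blast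
        ultimately have False using even_impossible[OF mon dn char2 _ pm pi chi \<open>even n\<close>] by blast
        thus ?thesis ..
      qed
    next
      case False
      then obtain k where k: "k = - f k" "k \<noteq> 0" using exists_k by blast
      have "c 0 = 1" using ce eps_nonid False by simp
      thus ?thesis using frag_sol[OF case_c[OF k, of m] dn] nm False by blast
    qed
  qed
next
  case False
  then obtain m where nm: "n = 2 * m + 1" by (metis oddE)
  show ?thesis
  proof (cases "\<exists>\<alpha>. p = [:\<alpha>, 1:] \<and> \<alpha> ^ (n - 1) = -1")
    case False thus ?thesis using frag_sol[OF case_d[OF nm False] dn] by blast
  next
    case True
    then obtain \<alpha> where al: "p = [:\<alpha>, 1:]" "\<alpha> ^ (n - 1) = -1" by blast
    show ?thesis
    proof (cases "f = id")
      case fid: True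
      have "\<alpha> * \<alpha> = 1"
      proof (rule alpha_sq[OF mon dn n1 R_id[OF fid], of \<alpha> s])
        show "chi = [:\<alpha>, 1:] ^ s" by (subst chi, subst al(1), rule refl)
      qed
      hence "\<alpha> ^ (n - 1) = 1" using nm by (simp add: power_mult power2_eq_square)
      hence "(1::'a) = -1" using al by simp
      hence False using char2 by (simp add: eq_neg_iff_add_eq_0)
      thus ?thesis ..
    next
      case False
      then obtain k where k: "k = - f k" "k \<noteq> 0" using exists_k by blast
      thus ?thesis using frag_sol[OF case_c[OF k, of m] dn] nm True by blast
    qed
  qed
qed

end

theorem theorem9:
  fixes inv_f :: "'a::field \<Rightarrow> 'a" and eps :: 'a
    and chi p :: "'a poly" and s n :: nat and Phi :: "'a mat"
  assumes inv: "is_involution inv_f"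
    and char2: "(2::'a) \<noteq> 0"
    and eps: "eps = 1 \<or> eps = -1"
    and eps_nonid: "inv_f \<noteq> id \<longrightarrow> eps = 1"
    and n: "n \<ge> 1" and deg: "degree chi = n"
    and p: "lead_coeff p = 1" "irreducible p" and chi: "chi = p ^ s"
    and Phi: "Phi = frobenius_block chi"
  defines "C1 \<equiv> coeff chi 0 \<noteq> 0 \<and> chi = dual_poly inv_f chi"
    and "C2 \<equiv> (inv_f = id \<and> eps = (-1) ^ n \<longrightarrow> degree p > 1)"
  shows "((\<exists>X. herm_solution inv_f eps n Phi X) \<longleftrightarrow> C1 \<and> C2) \<and>
    (C1 \<and> C2 \<longrightarrow>
      \<comment> \<open>(a)\<close>
      (\<forall>m. n = 2 * m \<and> coeff chi 0 \<noteq> eps \<longrightarrow>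
         fragment_works inv_f eps chi Phi m
           (\<lambda>i. if i = - int m then eps * inv_f (coeff chi 0) - 1
                else if i = int m then coeff chi 0 - eps else 0)) \<and>
      \<comment> \<open>(b)\<close>
      (\<forall>m. n = 2 * m \<and> eps = 1 \<and> inv_f = id \<longrightarrow>
         fragment_works inv_f eps chi Phi m
           (\<lambda>i. if n = 2 then
                  (if i = -1 \<or> i = 1 then coeff chi (n - 1) else if i = 0 then -2 else 0)
                else
                  (if i = - int m \<or> i = int m then coeff chi (n - 1)
                   else if i = - int m + 1 \<or> i = int m - 1 then -1 else 0))) \<and>
      \<comment> \<open>(c)\<close>
      (\<forall>m k. k = - inv_f k \<and> k \<noteq> 0 \<and>
          ((n = 2 * m \<and> coeff chi 0 = 1 \<and> inv_f \<noteq> id) \<or>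
           (n = 2 * m + 1 \<and> (\<exists>\<alpha>. p = [:\<alpha>, 1:] \<and> \<alpha> ^ (n - 1) = -1))) \<longrightarrow>
         fragment_works inv_f eps chi Phi m
           (\<lambda>i. if i = - int m then - k else if i = int m then k else 0)) \<and>
      \<comment> \<open>(d)\<close>
      (\<forall>m. n = 2 * m + 1 \<and> \<not> (\<exists>\<alpha>. p = [:\<alpha>, 1:] \<and> \<alpha> ^ (n - 1) = -1) \<longrightarrow>
         fragment_works inv_f eps chi Phi m
           (\<lambda>i. if i = - int m then eps else if i = int m then 1 else 0)))"
proof -
  have mon: "lead_coeff chi = 1" using chi p by (simp add: lead_coeff_power)
  have loc: "setting inv_f eps chi p s n" if c12: "C1 \<and> C2"
  proof (unfold_locales)
    show "is_involution inv_f" "(2::'a) \<noteq> 0" "eps = 1 \<or> eps = -1" "inv_f \<noteq> id \<longrightarrow> eps = 1"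
      "n \<ge> 1" "degree chi = n" "lead_coeff p = 1" "irreducible p" "chi = p ^ s"
      using inv char2 eps eps_nonid n deg p chi by blast+
    show "\<And>k. k \<le> n \<Longrightarrow> inv_f (coeff chi (n - k)) = inv_f (coeff chi 0) * coeff chi k"
      using C1_imp_R[OF inv mon deg] c12 unfolding C1_def by blast
    show "inv_f = id \<and> eps = (- 1) ^ n \<longrightarrow> 1 < degree p" using c12 unfolding C2_def by blast
  qed
  have nec: "C1 \<and> C2" if ex: "\<exists>X. herm_solution inv_f eps n Phi X"
  proof -
    obtain X where sol: "herm_solution inv_f eps n (frobenius_block chi) X" using ex Phi by blast
    obtain a where R: "\<forall>k\<le>n. inv_f (coeff chi (n - k)) = inv_f (coeff chi 0) * coeff chi k"
      using nec_main[OF inv mon deg n eps sol] by blast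
    have c1: C1 unfolding C1_def using R_imp_C1[OF inv mon deg] R by blast
    have c2: C2 unfolding C2_def
    proof
      assume h: "inv_f = id \<and> eps = (- 1) ^ n"
      show "degree p > 1"
      proof (rule ccontr)
        assume "\<not> degree p > 1"
        hence d1: "degree p = 1" using irr_deg_pos[OF p(2)] by simp
        have pl: "p = [:coeff p 0, 1:]" using lin_p[OF p(1) d1] .
        have "n = s * degree p" using deg chi p(2) by (simp add: degree_power_eq irreducible_def)
        hence "s = n" using d1 by simp
        hence chi': "chi = [:coeff p 0, 1:] ^ n" using chi pl by simp
        have sol': "herm_solution id eps n (frobenius_block chi) X" using sol h by simp
        show False by (rule C2_nec[OF mon deg n char2 chi' _ sol']) (use h in simp)
      qed
    qed
    show ?thesis using c1 c2 by blast
  qed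
  have suff: "\<exists>X. herm_solution inv_f eps n Phi X" if c12: "C1 \<and> C2"
  proof -
    interpret S: setting inv_f eps chi p s n by (rule loc[OF c12])
    show ?thesis using S.exists_sol Phi by simp
  qed
  have part2: "C1 \<and> C2 \<longrightarrow>
      (\<forall>m. n = 2 * m \<and> coeff chi 0 \<noteq> eps \<longrightarrow>
         fragment_works inv_f eps chi Phi m
           (\<lambda>i. if i = - int m then eps * inv_f (coeff chi 0) - 1
                else if i = int m then coeff chi 0 - eps else 0)) \<and>
      (\<forall>m. n = 2 * m \<and> eps = 1 \<and> inv_f = id \<longrightarrow>
         fragment_works inv_f eps chi Phi m
           (\<lambda>i. if n = 2 then
                  (if i = -1 \<or> i = 1 then coeff chi (n - 1) else if i = 0 then -2 else 0)
                else
                  (if i = - int m \<or> i = int m then coeff chi (n - 1)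
                   else if i = - int m + 1 \<or> i = int m - 1 then -1 else 0))) \<and>
      (\<forall>m k. k = - inv_f k \<and> k \<noteq> 0 \<and>
          ((n = 2 * m \<and> coeff chi 0 = 1 \<and> inv_f \<noteq> id) \<or>
           (n = 2 * m + 1 \<and> (\<exists>\<alpha>. p = [:\<alpha>, 1:] \<and> \<alpha> ^ (n - 1) = -1))) \<longrightarrow>
         fragment_works inv_f eps chi Phi m
           (\<lambda>i. if i = - int m then - k else if i = int m then k else 0)) \<and>
      (\<forall>m. n = 2 * m + 1 \<and> \<not> (\<exists>\<alpha>. p = [:\<alpha>, 1:] \<and> \<alpha> ^ (n - 1) = -1) \<longrightarrow>
         fragment_works inv_f eps chi Phi m
           (\<lambda>i. if i = - int m then eps else if i = int m then 1 else 0))"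
  proof (intro conjI allI impI)
      fix m assume c12: "C1 \<and> C2" and h: "n = 2 * m \<and> coeff chi 0 \<noteq> eps"
      show "fragment_works inv_f eps chi Phi m
           (\<lambda>i. if i = - int m then eps * inv_f (coeff chi 0) - 1
                else if i = int m then coeff chi 0 - eps else 0)"
        unfolding Phi using h by (intro setting.case_a[OF loc[OF c12]]) auto
    next
      fix m assume c12: "C1 \<and> C2" and h: "n = 2 * m \<and> eps = 1 \<and> inv_f = id"
      show "fragment_works inv_f eps chi Phi m
           (\<lambda>i. if n = 2 then
                  (if i = -1 \<or> i = 1 then coeff chi (n - 1) else if i = 0 then -2 else 0)
                else
                  (if i = - int m \<or> i = int m then coeff chi (n - 1)
                   else if i = - int m + 1 \<or> i = int m - 1 then -1 else 0))"
        unfolding Phi using h by (intro setting.case_b[OF loc[OF c12]]) auto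
    next
      fix m k assume c12: "C1 \<and> C2" and h: "k = - inv_f k \<and> k \<noteq> 0 \<and>
          ((n = 2 * m \<and> coeff chi 0 = 1 \<and> inv_f \<noteq> id) \<or>
           (n = 2 * m + 1 \<and> (\<exists>\<alpha>. p = [:\<alpha>, 1:] \<and> \<alpha> ^ (n - 1) = -1)))"
      show "fragment_works inv_f eps chi Phi m
           (\<lambda>i. if i = - int m then - k else if i = int m then k else 0)"
        unfolding Phi using h by (intro setting.case_c[OF loc[OF c12]]) auto
    next
      fix m assume c12: "C1 \<and> C2" and h: "n = 2 * m + 1 \<and> \<not> (\<exists>\<alpha>. p = [:\<alpha>, 1:] \<and> \<alpha> ^ (n - 1) = -1)"
      show "fragment_works inv_f eps chi Phi m
           (\<lambda>i. if i = - int m then eps else if i = int m then 1 else 0)"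
        unfolding Phi using h by (intro setting.case_d[OF loc[OF c12]]) auto
  qed
  have part1: "(\<exists>X. herm_solution inv_f eps n Phi X) \<longleftrightarrow> C1 \<and> C2"
    using nec suff by (intro iffI) auto
  show ?thesis by (rule conjI[OF part1 part2])
qed


end
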